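(* Let $0<\gamma<1$, $\Omega=(a,b)\times(c,d)$, $u\in C^6([a,b]\times[c,d])$, and let $u_Q$ be its tensor-product piecewise quadratic interpolant (see context). Then there is a constant $C$, depending on $u,\gamma,a,b,c,d$ but not on $M_x,M_y,i,j$, such that for all $M_x,M_y\ge2$, $i\in\{1,\dots,2M_x-1\}$, $j\in\{1,\dots,2M_y-1\}$, $$\left|\int_c^d\!\!\int_a^b\frac{u(x,y)-u_Q(x,y)}{\big((x_{i/2}-x)^2+(y_{j/2}-y)^2\big)^{\gamma/2}}\,dx\,dy\right|\le C\Big(h_x^4\eta_{i/2}^{-\gamma}+h_y^4\tilde\eta_{j/2}^{-\gamma}+h_x^{5-\gamma}+h_y^{5-\gamma}\Big),$$ where $\eta_{i/2}=\min\{x_{i/2}-a,\,b-x_{i/2}\}$ and $\tilde\eta_{j/2}=\min\{y_{j/2}-c,\,d-y_{j/2}\}$.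
   Context: Let $a<b$, $c<d$, $M_x,M_y\ge2$ integers, $h_x=(b-a)/M_x$, $h_y=(d-c)/M_y$, $x_s=a+sh_x$ ($s\in\{0,\tfrac12,\dots,M_x\}$), $y_s=c+sh_y$ ($s\in\{0,\tfrac12,\dots,M_y\}$). On $[a,b]$ the piecewise quadratic Lagrange basis $\phi_s(x)$ is: for integers $0\le l\le M_x$, $\phi_l(x)=\frac{x-x_{l-1}}{h_x}\cdot\frac{2x-(x_l+x_{l-1})}{h_x}$ on $[x_{l-1},x_l]\cap[a,b]$, $\phi_l(x)=\frac{x_{l+1}-x}{h_x}\cdot\frac{(x_{l+1}+x_l)-2x}{h_x}$ on $[x_l,x_{l+1}]\cap[a,b]$, $0$ otherwise; for $l=1,\dots,M_x$, $\phi_{l-\frac12}(x)=\frac{4(x-x_{l-1})(x_l-x)}{h_x^2}$ on $[x_{l-1},x_l]$, $0$ otherwise. The basis $\phi_s(y)$ on $[c,d]$ is defined analogously with $y_s,h_y,M_y$. The interpolant is $$u_Q(x,y)=\sum_{l=0}^{2M_x}\sum_{r=0}^{2M_y}\phi_{l/2}(x)\phi_{r/2}(y)\,u(x_{l/2},y_{r/2}).$$ *)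

theory Defs
  imports "HOL-Analysis.Analysis"
begin

text \<open>C^k regularity on a closed set S of the plane: all iterated partial derivatives
  up to order k exist (taken within S, i.e. one-sided at the boundary of a rectangle)
  and are continuous on S.\<close>
fun smooth2_on :: "nat \<Rightarrow> (real \<times> real) set \<Rightarrow> (real \<Rightarrow> real \<Rightarrow> real) \<Rightarrow> bool" where
  "smooth2_on 0 S f = continuous_on S (\<lambda>p. f (fst p) (snd p))"
| "smooth2_on (Suc k) S f =
     (continuous_on S (\<lambda>p. f (fst p) (snd p)) \<and>
      (\<exists>fx fy.
        (\<forall>x y. (x, y) \<in> S \<longrightarrow>
           ((\<lambda>t. f t y) has_real_derivative fx x y) (at x within {t. (t, y) \<in> S}) \<and>
           ((\<lambda>t. f x t) has_real_derivative fy x y) (at y within {t. (x, t) \<in> S})) \<and>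
        smooth2_on k S fx \<and> smooth2_on k S fy))"

definition node :: "real \<Rightarrow> real \<Rightarrow> real \<Rightarrow> real" where
  "node a h t = a + t * h"

definition phi_int :: "real \<Rightarrow> real \<Rightarrow> real \<Rightarrow> nat \<Rightarrow> real \<Rightarrow> real" where
  "phi_int a b h l x =
     (let xm = node a h (real l - 1); xl = node a h (real l); xp = node a h (real l + 1) in
      if x \<in> {a..b} \<inter> {xm..xl} then ((x - xm) / h) * ((2 * x - (xl + xm)) / h)
      else if x \<in> {a..b} \<inter> {xl..xp} then ((xp - x) / h) * (((xp + xl) - 2 * x) / h)
      else 0)"

text \<open>Midpoint basis function phi_{l-1/2}, l \<ge> 1.\<close>
definition phi_half :: "real \<Rightarrow> real \<Rightarrow> nat \<Rightarrow> real \<Rightarrow> real" where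
  "phi_half a h l x =
     (let xm = node a h (real l - 1); xl = node a h (real l) in
      if x \<in> {xm..xl} then 4 * (x - xm) * (xl - x) / h\<^sup>2 else 0)"

text \<open>phiQ a b M k = phi_{k/2} on [a,b] with M intervals.\<close>
definition phiQ :: "real \<Rightarrow> real \<Rightarrow> nat \<Rightarrow> nat \<Rightarrow> real \<Rightarrow> real" where
  "phiQ a b M k x =
     (let h = (b - a) / real M in
      if even k then phi_int a b h (k div 2) x else phi_half a h ((k + 1) div 2) x)"

definition uQ :: "(real \<Rightarrow> real \<Rightarrow> real) \<Rightarrow> real \<Rightarrow> real \<Rightarrow> real \<Rightarrow> real \<Rightarrow> nat \<Rightarrow> nat \<Rightarrow> real \<Rightarrow> real \<Rightarrow> real" where
  "uQ u a b c d Mx My x y =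
     (\<Sum>l = 0..2 * Mx. \<Sum>r = 0..2 * My.
        phiQ a b Mx l x * phiQ c d My r y *
        u (node a ((b - a) / real Mx) (real l / 2)) (node c ((d - c) / real My) (real r / 2)))"

end

theory Submission
  imports Defs
begin

lemma phi_int_tau:
  assumes h: "h > 0" and ab: "a + tau * h \<in> {a..b}"
  shows "phi_int a b h j (a + tau * h) =
    (if tau \<in> {real j - 1 .. real j} then (tau - real j + 1) * (2 * tau - 2 * real j + 1)
     else if tau \<in> {real j .. real j + 1} then (real j + 1 - tau) * (2 * real j + 1 - 2 * tau) else 0)"
proof -
  have e1: "(a + tau * h \<in> {a + (real j - 1) * h .. a + real j * h}) = (tau \<in> {real j - 1 .. real j})"
    using h by (auto simp: mult_le_cancel_right)
  have e2: "(a + tau * h \<in> {a + real j * h .. a + (real j + 1) * h}) = (tau \<in> {real j .. real j + 1})"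
    using h by (auto simp: mult_le_cancel_right)
  show ?thesis
    unfolding phi_int_def node_def Let_def using ab e1 e2 h
    by (auto simp: field_simps)
qed

lemma phi_half_tau:
  assumes h: "h > 0"
  shows "phi_half a h j (a + tau * h) =
    (if tau \<in> {real j - 1 .. real j} then 4 * (tau - real j + 1) * (real j - tau) else 0)"
proof -
  have e1: "(a + tau * h \<in> {a + (real j - 1) * h .. a + real j * h}) = (tau \<in> {real j - 1 .. real j})"
    using h by (auto simp: mult_le_cancel_right)
  show ?thesis
    unfolding phi_half_def node_def Let_def using e1 h
    by (auto simp: field_simps power2_eq_square)
qed

definition P0 :: "real \<Rightarrow> real" where "P0 s = (1 - s) * (1 - 2 * s)"
definition P1 :: "real \<Rightarrow> real" where "P1 s = 4 * s * (1 - s)"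
definition P2 :: "real \<Rightarrow> real" where "P2 s = s * (2 * s - 1)"

lemma phi_int_zero:
  assumes h: "h > 0" and ab: "a + tau * h \<in> {a..b}" and o: "tau \<le> real j - 1 \<or> tau \<ge> real j + 1"
  shows "phi_int a b h j (a + tau * h) = 0"
  unfolding phi_int_tau[OF h ab] using o by auto

lemma phi_int_left:
  assumes h: "h > 0" and ab: "a + tau * h \<in> {a..b}" and o: "real j - 1 \<le> tau" "tau \<le> real j"
  shows "phi_int a b h j (a + tau * h) = (tau - real j + 1) * (2 * tau - 2 * real j + 1)"
  unfolding phi_int_tau[OF h ab] using o by auto

lemma phi_int_right:
  assumes h: "h > 0" and ab: "a + tau * h \<in> {a..b}" and o: "real j \<le> tau" "tau \<le> real j + 1"
  shows "phi_int a b h j (a + tau * h) = (real j + 1 - tau) * (2 * real j + 1 - 2 * tau)"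
  unfolding phi_int_tau[OF h ab] using o by auto

lemma phi_half_zero:
  assumes h: "h > 0" and o: "tau \<le> real j - 1 \<or> tau \<ge> real j"
  shows "phi_half a h j (a + tau * h) = 0"
  unfolding phi_half_tau[OF h] using o by auto

lemma phiQ_elem:
  assumes ab: "a < b" and M: "1 \<le> l" "l \<le> M" and s: "0 \<le> s" "s \<le> 1"
  shows "phiQ a b M k (a + (real l - 1 + s) * ((b - a) / real M)) =
    (if k = 2 * l - 2 then P0 s else if k = 2 * l - 1 then P1 s else if k = 2 * l then P2 s else 0)"
proof -
  define h where "h = (b - a) / real M"
  have h: "h > 0" using ab M by (auto simp: h_def)
  have Mh: "real M * h = b - a" using M by (auto simp: h_def)
  have lM: "real l \<le> real M" using M by auto
  have inab: "a + (real l - 1 + s) * h \<in> {a..b}"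
  proof -
    have "0 \<le> (real l - 1 + s) * h" using M s h by auto
    moreover have "(real l - 1 + s) * h \<le> real M * h"
      using M s h lM by (intro mult_right_mono) auto
    ultimately show ?thesis using Mh by auto
  qed
  show ?thesis
  proof (cases "even k")
    case True
    then obtain j where kj: "k = 2 * j" by blast
    have "phiQ a b M k (a + (real l - 1 + s) * h) = phi_int a b h j (a + (real l - 1 + s) * h)"
      unfolding phiQ_def h_def[symmetric] using kj by simp
    also have "\<dots> = (if k = 2 * l - 2 then P0 s else if k = 2 * l - 1 then P1 s else if k = 2 * l then P2 s else 0)"
    proof (cases "j = l - 1")
      case True
      then have rj: "real j = real l - 1" using M by auto
      have "phi_int a b h j (a + (real l - 1 + s) * h) = (real j + 1 - (real l - 1 + s)) * (2 * real j + 1 - 2 * (real l - 1 + s))"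
        by (rule phi_int_right[OF h inab]) (use rj s in auto)
      also have "\<dots> = P0 s" unfolding rj P0_def by (simp add: algebra_simps)
      moreover have "k = 2 * l - 2" using kj True by simp
      ultimately show ?thesis by simp
    next
      case F1: False
      show ?thesis
      proof (cases "j = l")
        case True
        then have rj: "real j = real l" by simp
        have "phi_int a b h j (a + (real l - 1 + s) * h) = (real l - 1 + s - real j + 1) * (2 * (real l - 1 + s) - 2 * real j + 1)"
          by (rule phi_int_left[OF h inab]) (use rj s in auto)
        also have "\<dots> = P2 s" unfolding rj P2_def by (simp add: algebra_simps)
        moreover have "k \<noteq> 2 * l - 2" "k \<noteq> 2 * l - 1" "k = 2 * l" using kj True M by auto
        ultimately show ?thesis by simp
      next
        case False
        then have "real j \<le> real l - 2 \<or> real j \<ge> real l + 1" using F1 M by linarith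
        then have "real l - 1 + s \<le> real j - 1 \<or> real l - 1 + s \<ge> real j + 1" using s by auto
        then show ?thesis using phi_int_zero[OF h inab] kj False F1 M by auto
      qed
    qed
    finally show ?thesis by (simp add: h_def)
  next
    case False
    then obtain j where kj: "k = 2 * j + 1" by (metis oddE)
    have "phiQ a b M k (a + (real l - 1 + s) * h) = phi_half a h (j+1) (a + (real l - 1 + s) * h)"
      unfolding phiQ_def h_def[symmetric] using kj by simp
    also have "\<dots> = (if k = 2 * l - 2 then P0 s else if k = 2 * l - 1 then P1 s else if k = 2 * l then P2 s else 0)"
    proof (cases "j + 1 = l")
      case True
      then have "real j = real l - 1" using M by auto
      have "phi_half a h (j+1) (a + (real l - 1 + s) * h) = 4 * (real l - 1 + s - real (j+1) + 1) * (real (j+1) - (real l - 1 + s))"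
        unfolding phi_half_tau[OF h] using True s by auto
      also have "\<dots> = P1 s" using True by (simp add: P1_def algebra_simps)
      moreover have "k \<noteq> 2 * l - 2" "k = 2 * l - 1" using kj True M by auto
      ultimately show ?thesis by simp
    next
      case False
      then have "real (j+1) \<le> real l - 1 \<or> real (j+1) \<ge> real l + 1" using M by linarith
      then have "real l - 1 + s \<le> real (j+1) - 1 \<or> real l - 1 + s \<ge> real (j+1)" using s by auto
      then show ?thesis using phi_half_zero[OF h, of "real l - 1 + s" "j+1" a] kj False M by auto
    qed
    finally show ?thesis by (simp add: h_def)
  qed
qed


definition IQ :: "real \<Rightarrow> real \<Rightarrow> nat \<Rightarrow> (real \<Rightarrow> real) \<Rightarrow> real \<Rightarrow> real" where
  "IQ a b M g t = (\<Sum>k = 0..2 * M. phiQ a b M k t * g (node a ((b - a) / real M) (real k / 2)))"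

lemma sum_three:
  fixes l M :: nat
  assumes l: "1 \<le> l" "l \<le> M"
    and z: "\<And>k. k \<in> {0..2*M} \<Longrightarrow> k \<noteq> 2*l-2 \<Longrightarrow> k \<noteq> 2*l-1 \<Longrightarrow> k \<noteq> 2*l \<Longrightarrow> f k = 0"
  shows "(\<Sum>k = 0..2 * M. f k) = f (2*l-2) + f (2*l-1) + f (2*l)"
proof -
  have "(\<Sum>k = 0..2 * M. f k) = (\<Sum>k \<in> {2*l-2, 2*l-1, 2*l}. f k)"
    by (rule sum.mono_neutral_right) (use l z in auto)
  also have "\<dots> = f (2*l-2) + f (2*l-1) + f (2*l)"
  proof -
    have "2*l-2 \<noteq> 2*l-1" "2*l-2 \<noteq> 2*l" "2*l-1 \<noteq> 2*l" using l by auto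
    then show ?thesis by (simp add: add.assoc)
  qed
  finally show ?thesis .
qed

lemma IQ_elem:
  assumes ab: "a < b" and l: "1 \<le> l" "l \<le> M" and s: "0 \<le> s" "s \<le> 1"
  shows "IQ a b M g (a + (real l - 1 + s) * ((b - a) / real M)) =
     g (a + (real l - 1) * ((b - a) / real M)) * P0 s
   + g (a + (real l - 1) * ((b - a) / real M) + ((b - a) / real M) / 2) * P1 s
   + g (a + (real l - 1) * ((b - a) / real M) + ((b - a) / real M)) * P2 s"
proof -
  define h where "h = (b - a) / real M"
  have "IQ a b M g (a + (real l - 1 + s) * h) =
     phiQ a b M (2*l-2) (a + (real l - 1 + s) * h) * g (node a h (real (2*l-2) / 2))
   + phiQ a b M (2*l-1) (a + (real l - 1 + s) * h) * g (node a h (real (2*l-1) / 2))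
   + phiQ a b M (2*l) (a + (real l - 1 + s) * h) * g (node a h (real (2*l) / 2))"
  proof -
    have pe: "\<And>k. phiQ a b M k (a + (real l - 1 + s) * h) = (if k = 2 * l - 2 then P0 s else if k = 2 * l - 1 then P1 s else if k = 2 * l then P2 s else 0)"
      unfolding h_def by (rule phiQ_elem[OF ab l s])
    show ?thesis unfolding IQ_def h_def[symmetric]
      by (rule sum_three[OF l]) (simp only: pe, auto)
  qed
  also have "\<dots> = g (a + (real l - 1) * h) * P0 s + g (a + (real l - 1) * h + h / 2) * P1 s
      + g (a + (real l - 1) * h + h) * P2 s"
  proof -
    have "real (2*l-2) / 2 = real l - 1" "real (2*l-1) / 2 = real l - 1 + 1/2" "real (2*l) / 2 = real l"
      using l by (auto simp: of_nat_diff)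
    moreover have "2*l-2 \<noteq> 2*l-1" "2*l-2 \<noteq> 2*l" "2*l-1 \<noteq> 2*l" using l by auto
    ultimately show ?thesis using l
        by (simp only: phiQ_elem[OF ab l s, unfolded h_def[symmetric]], simp add: node_def algebra_simps)
  qed
  finally show ?thesis by (simp add: h_def)
qed

lemma locate:
  assumes ab: "a < b" and M: "1 \<le> M" and t: "t \<in> {a..b}"
  shows "\<exists>l s. 1 \<le> l \<and> l \<le> M \<and> 0 \<le> s \<and> s \<le> 1 \<and> t = a + (real l - 1 + s) * ((b - a) / real M)"
proof -
  define h where "h = (b - a) / real M"
  have h: "h > 0" using ab M by (auto simp: h_def)
  define tau where "tau = (t - a) / h"
  have tau0: "0 \<le> tau" using t h by (auto simp: tau_def)
  have tauM: "tau \<le> real M"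
  proof -
    have "t - a \<le> b - a" using t by auto
    also have "b - a = real M * h" using M by (auto simp: h_def)
    finally show ?thesis using h by (auto simp: tau_def divide_simps mult.commute)
  qed
  have tt: "t = a + tau * h" using h by (auto simp: tau_def)
  show ?thesis
  proof (cases "tau \<le> 1")
    case True
    show ?thesis
      by (rule exI[of _ 1], rule exI[of _ tau]) (use True tau0 M tt in \<open>auto simp: h_def\<close>)
  next
    case False
    define l where "l = nat \<lceil>tau\<rceil>"
    have c1: "tau \<le> of_int \<lceil>tau\<rceil>" "of_int \<lceil>tau\<rceil> < tau + 1" by linarith+
    have c2: "real l = of_int \<lceil>tau\<rceil>" unfolding l_def using False by auto
    have l1: "real l - 1 \<le> tau" "tau \<le> real l" using c1 c2 by linarith+
    have "l \<ge> 1" using False l1 by auto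
    moreover have "l \<le> M" using tauM unfolding l_def by (simp add: nat_le_iff ceiling_le_iff)
    ultimately show ?thesis
      by (intro exI[of _ l] exI[of _ "tau - (real l - 1)"]) (use l1 tt in \<open>auto simp: h_def\<close>)
  qed
qed

lemma P_bounds:
  assumes "0 \<le> x" "x \<le> 1"
  shows "abs (P0 x) \<le> 1" "abs (P1 x) \<le> 1" "abs (P2 x) \<le> 1"
proof -
  have 1: "abs (1 - x) \<le> 1" using assms by auto
  have 2: "abs (1 - 2 * x) \<le> 1" using assms by auto
  have 3: "abs x \<le> 1" using assms by auto
  have 4: "abs (2 * x - 1) \<le> 1" using assms by auto
  show "abs (P0 x) \<le> 1" unfolding P0_def abs_mult using 1 2 by (simp add: mult_le_one)
  show "abs (P2 x) \<le> 1" unfolding P2_def abs_mult using 3 4 by (simp add: mult_le_one)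
  have "4 * x * (1 - x) = 1 - (2 * x - 1)^2" by algebra
  then have "4 * x * (1 - x) \<le> 1" by simp
  then show "abs (P1 x) \<le> 1" using assms unfolding P1_def by auto
qed

lemma phiQ_sum_abs:
  assumes ab: "a < b" and M: "1 \<le> M" and t: "t \<in> {a..b}"
  shows "(\<Sum>k = 0..2 * M. \<bar>phiQ a b M k t\<bar>) \<le> 3"
proof -
  obtain l s where ls: "1 \<le> l" "l \<le> M" "0 \<le> s" "s \<le> 1" and tt: "t = a + (real l - 1 + s) * ((b - a) / real M)"
    using locate[OF ab M t] by blast
  have "(\<Sum>k = 0..2 * M. \<bar>phiQ a b M k t\<bar>) = \<bar>P0 s\<bar> + \<bar>P1 s\<bar> + \<bar>P2 s\<bar>"
  proof -
    have pe: "\<And>k. phiQ a b M k t = (if k = 2 * l - 2 then P0 s else if k = 2 * l - 1 then P1 s else if k = 2 * l then P2 s else 0)"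
      unfolding tt by (rule phiQ_elem[OF ab ls])
    have "2*l-2 \<noteq> 2*l-1" "2*l-2 \<noteq> 2*l" "2*l-1 \<noteq> 2*l" using ls by auto
    then show ?thesis by (subst sum_three[OF ls(1,2)]) (simp only: pe, auto)+
  qed
  also have "\<dots> \<le> 3" using P_bounds[OF ls(3,4)] by linarith
  finally show ?thesis .
qed


lemma phiQ_cont:
  assumes ab: "a < b" and M: "1 \<le> M"
  shows "continuous_on {a..b} (phiQ a b M k)"
proof -
  define h where "h = (b - a) / real M"
  have h: "h > 0" using ab M by (auto simp: h_def)
  have Mh: "real M * h = b - a" using M by (auto simp: h_def)
  have cover: "{a..b} = (\<Union>l\<in>{1..M}. {a + (real l - 1) * h .. a + real l * h})"
  proof
    show "{a..b} \<subseteq> (\<Union>l\<in>{1..M}. {a + (real l - 1) * h .. a + real l * h})"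
    proof
      fix t assume t: "t \<in> {a..b}"
      obtain l s where ls: "1 \<le> l" "l \<le> M" "0 \<le> s" "s \<le> 1" and tt: "t = a + (real l - 1 + s) * h"
        using locate[OF ab M t] unfolding h_def by blast
      have "t \<in> {a + (real l - 1) * h .. a + real l * h}"
        unfolding tt using ls h by (auto simp: algebra_simps)
      then show "t \<in> (\<Union>l\<in>{1..M}. {a + (real l - 1) * h .. a + real l * h})" using ls by auto
    qed
  next
    show "(\<Union>l\<in>{1..M}. {a + (real l - 1) * h .. a + real l * h}) \<subseteq> {a..b}"
    proof
      fix t assume "t \<in> (\<Union>l\<in>{1..M}. {a + (real l - 1) * h .. a + real l * h})"
      then obtain l where l: "1 \<le> l" "l \<le> M" and t: "a + (real l - 1) * h \<le> t" "t \<le> a + real l * h" by auto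
      have "0 \<le> (real l - 1) * h" using l h by auto
      moreover have "real l * h \<le> real M * h" using l h by (intro mult_right_mono) auto
      ultimately show "t \<in> {a..b}" using t Mh by auto
    qed
  qed
  have "continuous_on (\<Union>l\<in>{1..M}. {a + (real l - 1) * h .. a + real l * h}) (phiQ a b M k)"
  proof (rule continuous_on_closed_Union)
    fix l assume l: "l \<in> {1..M}"
    define p where "p = a + (real l - 1) * h"
    have "continuous_on {a + (real l - 1) * h .. a + real l * h}
      (if k = 2 * l - 2 then (\<lambda>t. P0 ((t - p) / h)) else if k = 2 * l - 1 then (\<lambda>t. P1 ((t - p) / h))
            else if k = 2 * l then (\<lambda>t. P2 ((t - p) / h)) else (\<lambda>t. 0))"
      unfolding P0_def P1_def P2_def using h by (auto intro!: continuous_intros)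
    then show "continuous_on {a + (real l - 1) * h .. a + real l * h} (phiQ a b M k)"
    proof (rule continuous_on_eq)
      fix t assume t: "t \<in> {a + (real l - 1) * h .. a + real l * h}"
      define s where "s = (t - p) / h"
      have s: "0 \<le> s" "s \<le> 1" using t h unfolding s_def p_def by (auto simp: divide_simps algebra_simps)
      have tt: "t = a + (real l - 1 + s) * h" unfolding s_def p_def using h by (auto simp: field_simps)
      show "(if k = 2 * l - 2 then (\<lambda>t. P0 ((t - p) / h)) else if k = 2 * l - 1 then (\<lambda>t. P1 ((t - p) / h))
            else if k = 2 * l then (\<lambda>t. P2 ((t - p) / h)) else (\<lambda>t. 0)) t = phiQ a b M k t"
      proof -
        have pe: "phiQ a b M k t = (if k = 2 * l - 2 then P0 s else if k = 2 * l - 1 then P1 s else if k = 2 * l then P2 s else 0)"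
          unfolding tt h_def by (rule phiQ_elem[OF ab _ _ s]) (use l in auto)
        show ?thesis unfolding pe s_def by simp
      qed
    qed
  qed auto
  then show ?thesis using cover by simp
qed


lemma mono_from_deriv:
  fixes f f' :: "real \<Rightarrow> real"
  assumes ab: "a \<le> b" and sub: "{a..b} \<subseteq> S"
    and d: "\<And>t. t \<in> {a..b} \<Longrightarrow> (f has_real_derivative f' t) (at t within S)"
    and nn: "\<And>t. t \<in> {a..b} \<Longrightarrow> f' t \<ge> 0"
  shows "f a \<le> f b"
proof (rule DERIV_nonneg_imp_increasing_open[OF ab])
  fix x assume x: "a < x" "x < b"
  have "(f has_real_derivative f' x) (at x within {a..b})"
    using d[of x] x by (auto intro: has_field_derivative_subset[OF _ sub])
  then have "(f has_real_derivative f' x) (at x)" using at_within_Icc_at[OF x] by simp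
  then show "\<exists>y. (f has_real_derivative y) (at x) \<and> 0 \<le> y" using nn[of x] x by auto
next
  show "continuous_on {a..b} f"
    by (rule DERIV_continuous_on[of _ _ f']) (use d sub in \<open>auto intro: has_field_derivative_subset\<close>)
qed

lemma mono_from_deriv_dec:
  fixes f f' :: "real \<Rightarrow> real"
  assumes ab: "a \<le> b" and sub: "{a..b} \<subseteq> S"
    and d: "\<And>t. t \<in> {a..b} \<Longrightarrow> (f has_real_derivative f' t) (at t within S)"
    and nn: "\<And>t. t \<in> {a..b} \<Longrightarrow> f' t \<le> 0"
  shows "f b \<le> f a"
proof -
  have "- f a \<le> - f b"
    by (rule mono_from_deriv[OF ab sub, where f' = "\<lambda>t. - f' t"]) (use d nn in \<open>auto intro: DERIV_minus\<close>)
  then show ?thesis by simp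
qed

lemma dpow1: "((\<lambda>t. D * (t - c) ^ (k + 1) / (real k + 1)) has_real_derivative D * (t - c) ^ k) (at t within S)"
proof -
  have nz: "real k + 1 \<noteq> 0" by (metis of_nat_Suc of_nat_eq_0_iff nat.distinct(1) add.commute)
  have "((\<lambda>t. D * (t - c) ^ (k + 1) / (real k + 1)) has_real_derivative D * (of_nat (k + 1) * ((1 - 0) * (t - c) ^ (k + 1 - Suc 0))) / (real k + 1)) (at t within S)"
    by (intro DERIV_cdivide DERIV_cmult DERIV_power DERIV_diff DERIV_ident DERIV_const)
  moreover have "D * (of_nat (k + 1) * ((1 - 0) * (t - c) ^ (k + 1 - Suc 0))) / (real k + 1) = D * (t - c) ^ k"
    using nz by (simp add: field_simps)
  ultimately show ?thesis by simp
qed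

lemma dpow2: "((\<lambda>t. D * (c - t) ^ (k + 1) / (real k + 1)) has_real_derivative - (D * (c - t) ^ k)) (at t within S)"
proof -
  have nz: "real k + 1 \<noteq> 0" by (metis of_nat_Suc of_nat_eq_0_iff nat.distinct(1) add.commute)
  have "((\<lambda>t. D * (c - t) ^ (k + 1) / (real k + 1)) has_real_derivative D * (of_nat (k + 1) * ((0 - 1) * (c - t) ^ (k + 1 - Suc 0))) / (real k + 1)) (at t within S)"
    by (intro DERIV_cdivide DERIV_cmult DERIV_power DERIV_diff DERIV_ident DERIV_const)
  moreover have "D * (of_nat (k + 1) * ((0 - 1) * (c - t) ^ (k + 1 - Suc 0))) / (real k + 1) = - (D * (c - t) ^ k)"
    using nz by (simp add: field_simps)
  ultimately show ?thesis by simp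
qed

lemma deriv_bound_step:
  fixes phi phi' :: "real \<Rightarrow> real"
  assumes c: "c \<in> {\<alpha>..\<beta>}" and x: "x \<in> {\<alpha>..\<beta>}"
    and d: "\<And>t. t \<in> {\<alpha>..\<beta>} \<Longrightarrow> (phi has_real_derivative phi' t) (at t within {\<alpha>..\<beta>})"
    and z: "phi c = 0"
    and bd: "\<And>t. t \<in> {\<alpha>..\<beta>} \<Longrightarrow> \<bar>phi' t\<bar> \<le> D * \<bar>t - c\<bar> ^ k"
  shows "\<bar>phi x\<bar> \<le> D * \<bar>x - c\<bar> ^ (k + 1) / (real k + 1)"
proof (cases "c \<le> x")
  case True
  have sub: "{c..x} \<subseteq> {\<alpha>..\<beta>}" using c x by auto
  have up: "phi x - D * (x - c) ^ (k + 1) / (real k + 1) \<le> phi c - D * (c - c) ^ (k + 1) / (real k + 1)"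
  proof (rule mono_from_deriv_dec[OF True sub, where f' = "\<lambda>t. phi' t - D * (t - c) ^ k"])
    fix t assume t: "t \<in> {c..x}"
    show "((\<lambda>t. phi t - D * (t - c) ^ (k + 1) / (real k + 1)) has_real_derivative phi' t - D * (t - c) ^ k) (at t within {\<alpha>..\<beta>})"
      using t sub by (intro DERIV_diff d dpow1) auto
    have "phi' t \<le> D * \<bar>t - c\<bar> ^ k" using bd[of t] t sub by auto
    then show "phi' t - D * (t - c) ^ k \<le> 0" using t by auto
  qed
  have lo: "phi c + D * (c - c) ^ (k + 1) / (real k + 1) \<le> phi x + D * (x - c) ^ (k + 1) / (real k + 1)"
  proof (rule mono_from_deriv[OF True sub, where f' = "\<lambda>t. phi' t + D * (t - c) ^ k"])
    fix t assume t: "t \<in> {c..x}"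
    show "((\<lambda>t. phi t + D * (t - c) ^ (k + 1) / (real k + 1)) has_real_derivative phi' t + D * (t - c) ^ k) (at t within {\<alpha>..\<beta>})"
      using t sub by (intro DERIV_add d dpow1) auto
    have "- phi' t \<le> D * \<bar>t - c\<bar> ^ k" using bd[of t] t sub by auto
    then show "0 \<le> phi' t + D * (t - c) ^ k" using t by auto
  qed
  show ?thesis using up lo z True by (auto simp: abs_le_iff)
next
  case False
  then have xc: "x \<le> c" by auto
  have sub: "{x..c} \<subseteq> {\<alpha>..\<beta>}" using c x by auto
  have up: "phi x - D * (c - x) ^ (k + 1) / (real k + 1) \<le> phi c - D * (c - c) ^ (k + 1) / (real k + 1)"
  proof (rule mono_from_deriv[OF xc sub, where f' = "\<lambda>t. phi' t - - (D * (c - t) ^ k)"])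
    fix t assume t: "t \<in> {x..c}"
    show "((\<lambda>t. phi t - D * (c - t) ^ (k + 1) / (real k + 1)) has_real_derivative phi' t - - (D * (c - t) ^ k)) (at t within {\<alpha>..\<beta>})"
      using t sub by (intro DERIV_diff d dpow2) auto
    have "- phi' t \<le> D * \<bar>t - c\<bar> ^ k" using bd[of t] t sub by auto
    also have "\<bar>t - c\<bar> = c - t" using t by auto
    finally show "0 \<le> phi' t - - (D * (c - t) ^ k)" by auto
  qed
  have lo: "phi x + D * (c - x) ^ (k + 1) / (real k + 1) \<ge> phi c + D * (c - c) ^ (k + 1) / (real k + 1)"
  proof (rule mono_from_deriv_dec[OF xc sub, where f' = "\<lambda>t. phi' t + - (D * (c - t) ^ k)"])
    fix t assume t: "t \<in> {x..c}"
    show "((\<lambda>t. phi t + D * (c - t) ^ (k + 1) / (real k + 1)) has_real_derivative phi' t + - (D * (c - t) ^ k)) (at t within {\<alpha>..\<beta>})"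
      using t sub by (intro DERIV_add d dpow2) auto
    have "phi' t \<le> D * \<bar>t - c\<bar> ^ k" using bd[of t] t sub by auto
    also have "\<bar>t - c\<bar> = c - t" using t by auto
    finally show "phi' t + - (D * (c - t) ^ k) \<le> 0" by auto
  qed
  have "\<bar>x - c\<bar> = c - x" using xc by auto
  then show ?thesis using up lo z by (auto simp: abs_le_iff)
qed


lemma taylor4:
  fixes g0 g1 g2 g3 g4 :: "real \<Rightarrow> real"
  assumes c: "c \<in> {\<alpha>..\<beta>}" and x: "x \<in> {\<alpha>..\<beta>}"
    and d0: "\<And>t. t \<in> {\<alpha>..\<beta>} \<Longrightarrow> (g0 has_real_derivative g1 t) (at t within {\<alpha>..\<beta>})"
    and d1: "\<And>t. t \<in> {\<alpha>..\<beta>} \<Longrightarrow> (g1 has_real_derivative g2 t) (at t within {\<alpha>..\<beta>})"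
    and d2: "\<And>t. t \<in> {\<alpha>..\<beta>} \<Longrightarrow> (g2 has_real_derivative g3 t) (at t within {\<alpha>..\<beta>})"
    and d3: "\<And>t. t \<in> {\<alpha>..\<beta>} \<Longrightarrow> (g3 has_real_derivative g4 t) (at t within {\<alpha>..\<beta>})"
    and bd: "\<And>t. t \<in> {\<alpha>..\<beta>} \<Longrightarrow> \<bar>g4 t\<bar> \<le> B"
  shows "\<bar>g0 x - (g0 c + g1 c * (x - c) + g2 c * (x - c)^2 / 2 + g3 c * (x - c)^3 / 6)\<bar> \<le> B * \<bar>x - c\<bar>^4 / 24"
proof -
  have s3: "\<bar>g3 y - g3 c\<bar> \<le> B * \<bar>y - c\<bar>" if y: "y \<in> {\<alpha>..\<beta>}" for y
  proof -
    have "\<bar>(\<lambda>t. g3 t - g3 c) y\<bar> \<le> B * \<bar>y - c\<bar> ^ (0 + 1) / (real 0 + 1)"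
    proof (rule deriv_bound_step[OF c y, where phi' = g4])
      fix t assume t: "t \<in> {\<alpha>..\<beta>}"
      show "((\<lambda>t. g3 t - g3 c) has_real_derivative g4 t) (at t within {\<alpha>..\<beta>})"
        using d3[OF t] by (auto intro!: derivative_eq_intros)
      show "\<bar>g4 t\<bar> \<le> B * \<bar>t - c\<bar> ^ 0" using bd[OF t] by simp
    qed simp
    then show ?thesis by simp
  qed
  have s2: "\<bar>g2 y - g2 c - g3 c * (y - c)\<bar> \<le> B * \<bar>y - c\<bar>^2 / 2" if y: "y \<in> {\<alpha>..\<beta>}" for y
  proof -
    have "\<bar>(\<lambda>t. g2 t - g2 c - g3 c * (t - c)) y\<bar> \<le> B * \<bar>y - c\<bar> ^ (1 + 1) / (real 1 + 1)"
    proof (rule deriv_bound_step[OF c y, where phi' = "\<lambda>t. g3 t - g3 c"])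
      fix t assume t: "t \<in> {\<alpha>..\<beta>}"
      show "((\<lambda>t. g2 t - g2 c - g3 c * (t - c)) has_real_derivative g3 t - g3 c) (at t within {\<alpha>..\<beta>})"
        using d2[OF t] by (auto intro!: derivative_eq_intros)
      show "\<bar>g3 t - g3 c\<bar> \<le> B * \<bar>t - c\<bar> ^ 1" using s3[OF t] by simp
    qed simp
    then show ?thesis by (simp add: power2_eq_square)
  qed
  have s1: "\<bar>g1 y - g1 c - g2 c * (y - c) - g3 c * (y - c)^2 / 2\<bar> \<le> (B / 2) * \<bar>y - c\<bar>^3 / 3" if y: "y \<in> {\<alpha>..\<beta>}" for y
  proof -
    have "\<bar>(\<lambda>t. g1 t - g1 c - g2 c * (t - c) - g3 c * (t - c)^2 / 2) y\<bar> \<le> (B / 2) * \<bar>y - c\<bar> ^ (2 + 1) / (real 2 + 1)"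
    proof (rule deriv_bound_step[OF c y, where phi' = "\<lambda>t. g2 t - g2 c - g3 c * (t - c)"])
      fix t assume t: "t \<in> {\<alpha>..\<beta>}"
      show "((\<lambda>t. g1 t - g1 c - g2 c * (t - c) - g3 c * (t - c)^2 / 2) has_real_derivative g2 t - g2 c - g3 c * (t - c)) (at t within {\<alpha>..\<beta>})"
        using d1[OF t] by (auto intro!: derivative_eq_intros simp: power2_eq_square field_simps)
      show "\<bar>g2 t - g2 c - g3 c * (t - c)\<bar> \<le> (B / 2) * \<bar>t - c\<bar> ^ 2" using s2[OF t] by simp
    qed simp
    then show ?thesis by (simp add: numeral_eq_Suc)
  qed
  have "\<bar>(\<lambda>t. g0 t - g0 c - g1 c * (t - c) - g2 c * (t - c)^2 / 2 - g3 c * (t - c)^3 / 6) x\<bar> \<le> (B / 6) * \<bar>x - c\<bar> ^ (3 + 1) / (real 3 + 1)"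
  proof (rule deriv_bound_step[OF c x, where phi' = "\<lambda>t. g1 t - g1 c - g2 c * (t - c) - g3 c * (t - c)^2 / 2"])
    fix t assume t: "t \<in> {\<alpha>..\<beta>}"
    show "((\<lambda>t. g0 t - g0 c - g1 c * (t - c) - g2 c * (t - c)^2 / 2 - g3 c * (t - c)^3 / 6) has_real_derivative g1 t - g1 c - g2 c * (t - c) - g3 c * (t - c)^2 / 2) (at t within {\<alpha>..\<beta>})"
      using d0[OF t] by (auto intro!: derivative_eq_intros simp: power2_eq_square power3_eq_cube field_simps)
    show "\<bar>g1 t - g1 c - g2 c * (t - c) - g3 c * (t - c)^2 / 2\<bar> \<le> (B / 6) * \<bar>t - c\<bar> ^ 3" using s1[OF t] by simp
  qed simp
  then show ?thesis by (simp add: numeral_eq_Suc algebra_simps)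
qed


lemma interp_identity:
  fixes A0 A1 A2 A3 h sg :: real
  shows "(A0 + A1 * (-h/2) + A2 * (-h/2)^2/2 + A3 * (-h/2)^3/6) * P0 sg + A0 * P1 sg
       + (A0 + A1 * (h/2) + A2 * (h/2)^2/2 + A3 * (h/2)^3/6) * P2 sg
     = (A0 + A1 * ((sg - 1/2) * h) + A2 * ((sg - 1/2) * h)^2/2 + A3 * ((sg - 1/2) * h)^3/6)
       - A3 / 6 * (((sg - 1/2) * h)^3 - h^2 * ((sg - 1/2) * h) / 4)"
  unfolding P0_def P1_def P2_def by (simp add: field_simps power2_eq_square power3_eq_cube)

lemma elem_err:
  fixes g g1 g2 g3 g4 :: "real \<Rightarrow> real"
  assumes h: "h > 0"
    and d0: "\<And>t. t \<in> {p..p+h} \<Longrightarrow> (g has_real_derivative g1 t) (at t within {p..p+h})"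
    and d1: "\<And>t. t \<in> {p..p+h} \<Longrightarrow> (g1 has_real_derivative g2 t) (at t within {p..p+h})"
    and d2: "\<And>t. t \<in> {p..p+h} \<Longrightarrow> (g2 has_real_derivative g3 t) (at t within {p..p+h})"
    and d3: "\<And>t. t \<in> {p..p+h} \<Longrightarrow> (g3 has_real_derivative g4 t) (at t within {p..p+h})"
    and b3: "\<And>t. t \<in> {p..p+h} \<Longrightarrow> \<bar>g3 t\<bar> \<le> M3"
    and b4: "\<And>t. t \<in> {p..p+h} \<Longrightarrow> \<bar>g4 t\<bar> \<le> M4"
    and t: "t \<in> {p..p+h}"
  shows "\<bar>(g t - (g p * P0 ((t-p)/h) + g (p + h/2) * P1 ((t-p)/h) + g (p+h) * P2 ((t-p)/h)))
           - g3 (p + h/2) / 6 * ((t - (p + h/2))^3 - h^2 * (t - (p + h/2)) / 4)\<bar> \<le> M4 * h^4 / 128"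
    and "\<bar>g3 (p + h/2) / 6 * ((t - (p + h/2))^3 - h^2 * (t - (p + h/2)) / 4)\<bar> \<le> M3 * h^3 / 48"
proof -
  define m where "m = p + h/2"
  have mE: "m \<in> {p..p+h}" using h by (auto simp: m_def)
  define T where "T x = g m + g1 m * (x - m) + g2 m * (x - m)^2 / 2 + g3 m * (x - m)^3 / 6" for x
  define R where "R x = g x - T x" for x
  have Rb: "\<bar>R x\<bar> \<le> M4 * h^4 / 384" if x: "x \<in> {p..p+h}" for x
  proof -
    have "\<bar>R x\<bar> \<le> M4 * \<bar>x - m\<bar>^4 / 24"
      unfolding R_def T_def by (rule taylor4[OF mE x d0 d1 d2 d3 b4])
    also have "\<dots> \<le> M4 * (h/2)^4 / 24"
    proof -
      have "\<bar>x - m\<bar> \<le> h/2" unfolding abs_le_iff m_def using x by auto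
      then have "\<bar>x - m\<bar>^4 \<le> (h/2)^4" by (intro power_mono) auto
      moreover have "M4 \<ge> 0" using b4[OF x] by auto
      ultimately show ?thesis by (intro divide_right_mono mult_left_mono) auto
    qed
    also have "\<dots> = M4 * h^4 / 384" by (simp add: power_divide)
    finally show ?thesis .
  qed
  define sg where "sg = (t - p) / h"
  have sg: "0 \<le> sg" "sg \<le> 1" using t h by (auto simp: sg_def divide_simps)
  have tt: "t = p + sg * h" using h by (simp add: sg_def)
  have Tp: "T p = g m + g1 m * (-h/2) + g2 m * (-h/2)^2/2 + g3 m * (-h/2)^3/6"
    by (simp add: T_def m_def)
  have Tq: "T (p+h) = g m + g1 m * (h/2) + g2 m * (h/2)^2/2 + g3 m * (h/2)^3/6"
    by (simp add: T_def m_def)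
  have Tt: "T t = g m + g1 m * ((sg - 1/2) * h) + g2 m * ((sg - 1/2) * h)^2/2 + g3 m * ((sg - 1/2) * h)^3/6"
    unfolding T_def tt m_def by (simp add: algebra_simps)
  have tm: "t - (p + h/2) = (sg - 1/2) * h" unfolding tt by (simp add: algebra_simps)
  have key: "(g t - (g p * P0 sg + g m * P1 sg + g (p+h) * P2 sg))
           - g3 m / 6 * (((sg - 1/2) * h)^3 - h^2 * ((sg - 1/2) * h) / 4)
       = R t - R p * P0 sg - R (p+h) * P2 sg"
  proof -
    have "g p = T p + R p" "g (p+h) = T (p+h) + R (p+h)" "g t = T t + R t" by (simp_all add: R_def)
    then have "g t - (g p * P0 sg + g m * P1 sg + g (p+h) * P2 sg)
        = T t + R t - ((T p + R p) * P0 sg + g m * P1 sg + (T (p+h) + R (p+h)) * P2 sg)" by simp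
    also have "\<dots> = T t - (T p * P0 sg + g m * P1 sg + T (p+h) * P2 sg) + R t - R p * P0 sg - R (p+h) * P2 sg"
      by (simp add: algebra_simps)
    also have "T p * P0 sg + g m * P1 sg + T (p+h) * P2 sg
       = T t - g3 m / 6 * (((sg - 1/2) * h)^3 - h^2 * ((sg - 1/2) * h) / 4)"
      unfolding Tp Tq Tt by (rule interp_identity)
    finally show ?thesis by simp
  qed
  have "\<bar>R t - R p * P0 sg - R (p+h) * P2 sg\<bar> \<le> \<bar>R t\<bar> + \<bar>R p\<bar> * \<bar>P0 sg\<bar> + \<bar>R (p+h)\<bar> * \<bar>P2 sg\<bar>"
  proof -
    have "\<bar>R t - R p * P0 sg - R (p+h) * P2 sg\<bar> \<le> \<bar>R t - R p * P0 sg\<bar> + \<bar>R (p+h) * P2 sg\<bar>"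
      by (rule abs_triangle_ineq4)
    moreover have "\<bar>R t - R p * P0 sg\<bar> \<le> \<bar>R t\<bar> + \<bar>R p * P0 sg\<bar>" by (rule abs_triangle_ineq4)
    ultimately show ?thesis by (simp add: abs_mult)
  qed
  also have "\<dots> \<le> M4 * h^4 / 384 + M4 * h^4 / 384 * 1 + M4 * h^4 / 384 * 1"
  proof -
    have pE: "p \<in> {p..p+h}" "p + h \<in> {p..p+h}" using h by auto
    have "M4 \<ge> 0" using b4[OF t] by auto
    then have z: "0 \<le> M4 * h^4 / 384" using h by auto
    show ?thesis
      using Rb[OF t] Rb[OF pE(1)] Rb[OF pE(2)] P_bounds[OF sg] z
      by (intro add_mono mult_mono) auto
  qed
  finally have "\<bar>R t - R p * P0 sg - R (p+h) * P2 sg\<bar> \<le> M4 * h^4 / 128" by simp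
  then show "\<bar>(g t - (g p * P0 ((t-p)/h) + g (p + h/2) * P1 ((t-p)/h) + g (p+h) * P2 ((t-p)/h)))
           - g3 (p + h/2) / 6 * ((t - (p + h/2))^3 - h^2 * (t - (p + h/2)) / 4)\<bar> \<le> M4 * h^4 / 128"
    using key unfolding sg_def[symmetric] tm m_def by simp
  have "\<bar>((sg - 1/2) * h)^3 - h^2 * ((sg - 1/2) * h) / 4\<bar> \<le> h^3 / 8"
  proof -
    define tau where "tau = (sg - 1/2) * h"
    have s2: "\<bar>sg - 1/2\<bar> \<le> 1/2" unfolding abs_le_iff using sg by auto
    have "\<bar>tau\<bar> = \<bar>sg - 1/2\<bar> * h" using h unfolding tau_def abs_mult by simp
    also have "\<dots> \<le> 1/2 * h" using s2 h by (intro mult_right_mono) auto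
    finally have ta: "\<bar>tau\<bar> \<le> h/2" by simp
    have "tau^2 \<le> (h/2)^2" using ta by (metis abs_le_square_iff power2_abs abs_of_pos h half_gt_zero abs_of_nonneg)
    then have tq: "\<bar>tau^2 - h^2/4\<bar> \<le> h^2/4" by (auto simp: power_divide)
    have "tau^3 - h^2 * tau / 4 = tau * (tau^2 - h^2/4)" by (simp add: algebra_simps power3_eq_cube power2_eq_square)
    then have "\<bar>tau^3 - h^2 * tau / 4\<bar> = \<bar>tau\<bar> * \<bar>tau^2 - h^2/4\<bar>" by (simp add: abs_mult)
    also have "\<dots> \<le> (h/2) * (h^2/4)" using ta tq by (intro mult_mono) auto
    also have "\<dots> = h^3/8" by (simp add: power3_eq_cube power2_eq_square)
    finally show ?thesis unfolding tau_def .
  qed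
  moreover have "\<bar>g3 m\<bar> \<le> M3" using b3[OF mE] .
  ultimately have "\<bar>g3 m\<bar> / 6 * \<bar>((sg - 1/2) * h)^3 - h^2 * ((sg - 1/2) * h) / 4\<bar> \<le> M3 / 6 * (h^3 / 8)"
    by (intro mult_mono divide_right_mono) auto
  then show "\<bar>g3 (p + h/2) / 6 * ((t - (p + h/2))^3 - h^2 * (t - (p + h/2)) / 4)\<bar> \<le> M3 * h^3 / 48"
  proof -
    have tm2: "t - m = (sg - 1/2) * h" using tm by (simp add: m_def)
    show ?thesis unfolding m_def[symmetric] tm2 using \<open>\<bar>g3 m\<bar> / 6 * _ \<le> _\<close> by (simp add: abs_mult)
  qed
qed


lemma cub_integral:
  fixes C h p :: real
  assumes h: "h > 0"
  shows "((\<lambda>t. C / 6 * ((t - (p + h/2))^3 - h^2 * (t - (p + h/2)) / 4)) has_integral 0) {p..p+h}"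
proof -
  define G where "G t = C / 6 * ((t - (p + h/2))^4 / 4 - h^2 * (t - (p + h/2))^2 / 8)" for t
  have "((\<lambda>t. C / 6 * ((t - (p + h/2))^3 - h^2 * (t - (p + h/2)) / 4)) has_integral G (p+h) - G p) {p..p+h}"
  proof (rule fundamental_theorem_of_calculus)
    show "p \<le> p + h" using h by simp
    fix t assume "t \<in> {p..p+h}"
    show "(G has_vector_derivative C / 6 * ((t - (p + h/2))^3 - h^2 * (t - (p + h/2)) / 4)) (at t within {p..p+h})"
      unfolding G_def has_real_derivative_iff_has_vector_derivative[symmetric]
      by (auto intro!: derivative_eq_intros simp: field_simps power2_eq_square power3_eq_cube numeral_eq_Suc)
  qed
  moreover have "G (p+h) - G p = 0"
    unfolding G_def by (simp add: field_simps power2_eq_square numeral_eq_Suc)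
  ultimately show ?thesis by simp
qed

lemma elem_int:
  fixes g g1 g2 g3 g4 k :: "real \<Rightarrow> real"
  assumes h: "h > 0"
    and d0: "\<And>t. t \<in> {p..p+h} \<Longrightarrow> (g has_real_derivative g1 t) (at t within {p..p+h})"
    and d1: "\<And>t. t \<in> {p..p+h} \<Longrightarrow> (g1 has_real_derivative g2 t) (at t within {p..p+h})"
    and d2: "\<And>t. t \<in> {p..p+h} \<Longrightarrow> (g2 has_real_derivative g3 t) (at t within {p..p+h})"
    and d3: "\<And>t. t \<in> {p..p+h} \<Longrightarrow> (g3 has_real_derivative g4 t) (at t within {p..p+h})"
    and b3: "\<And>t. t \<in> {p..p+h} \<Longrightarrow> \<bar>g3 t\<bar> \<le> M3"
    and b4: "\<And>t. t \<in> {p..p+h} \<Longrightarrow> \<bar>g4 t\<bar> \<le> M4"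
    and kc: "continuous_on {p..p+h} k"
    and kW: "\<And>t. t \<in> {p..p+h} \<Longrightarrow> \<bar>k t - k p\<bar> \<le> W"
    and kK: "\<bar>k p\<bar> \<le> K"
  shows "(\<lambda>t. (g t - (g p * P0 ((t-p)/h) + g (p + h/2) * P1 ((t-p)/h) + g (p+h) * P2 ((t-p)/h))) * k t) integrable_on {p..p+h}"
    and "\<bar>integral {p..p+h} (\<lambda>t. (g t - (g p * P0 ((t-p)/h) + g (p + h/2) * P1 ((t-p)/h) + g (p+h) * P2 ((t-p)/h))) * k t)\<bar>
         \<le> h * (M3 * h^3 / 48 + M4 * h^4 / 128) * W + K * (M4 * h^4 / 128 * h)"
proof -
  define e where "e t = g t - (g p * P0 ((t-p)/h) + g (p + h/2) * P1 ((t-p)/h) + g (p+h) * P2 ((t-p)/h))" for t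
  define cub where "cub t = g3 (p + h/2) / 6 * ((t - (p + h/2))^3 - h^2 * (t - (p + h/2)) / 4)" for t
  have gc: "continuous_on {p..p+h} g" by (rule DERIV_continuous_on[OF d0])
  have ec: "continuous_on {p..p+h} e" unfolding e_def P0_def P1_def P2_def
    using h by (auto intro!: continuous_intros gc)
  have cc: "continuous_on {p..p+h} cub" unfolding cub_def by (auto intro!: continuous_intros)
  have ecub: "\<bar>e t - cub t\<bar> \<le> M4 * h^4 / 128" if "t \<in> {p..p+h}" for t
    unfolding e_def cub_def by (rule elem_err(1)[OF h d0 d1 d2 d3 b3 b4 that])
  have cubb: "\<bar>cub t\<bar> \<le> M3 * h^3 / 48" if "t \<in> {p..p+h}" for t
    unfolding cub_def by (rule elem_err(2)[OF h d0 d1 d2 d3 b3 b4 that])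
  have eb: "\<bar>e t\<bar> \<le> M3 * h^3 / 48 + M4 * h^4 / 128" if "t \<in> {p..p+h}" for t
    using ecub[OF that] cubb[OF that] by linarith
  have pE: "p \<in> {p..p+h}" using h by auto
  have W0: "W \<ge> 0" using kW[OF pE] by simp
  have ph: "p \<le> p + h" using h by simp
  have int1: "(\<lambda>t. e t * k t) integrable_on {p..p+h}"
    by (intro integrable_continuous_interval continuous_intros ec kc)
  then show "(\<lambda>t. (g t - (g p * P0 ((t-p)/h) + g (p + h/2) * P1 ((t-p)/h) + g (p+h) * P2 ((t-p)/h))) * k t) integrable_on {p..p+h}"
    unfolding e_def .
  have ie: "e integrable_on {p..p+h}" by (intro integrable_continuous_interval ec)
  have iek: "(\<lambda>t. e t * (k t - k p)) integrable_on {p..p+h}"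
    by (intro integrable_continuous_interval continuous_intros ec kc)
  have split: "integral {p..p+h} (\<lambda>t. e t * k t) = integral {p..p+h} (\<lambda>t. e t * (k t - k p)) + k p * integral {p..p+h} e"
  proof -
    have "integral {p..p+h} (\<lambda>t. e t * k t) = integral {p..p+h} (\<lambda>t. e t * (k t - k p) + k p * e t)"
      by (simp add: algebra_simps)
    also have "\<dots> = integral {p..p+h} (\<lambda>t. e t * (k t - k p)) + integral {p..p+h} (\<lambda>t. k p * e t)"
      by (rule integral_add[OF iek]) (intro integrable_continuous_interval continuous_intros ec)
    also have "integral {p..p+h} (\<lambda>t. k p * e t) = k p * integral {p..p+h} e"
      by (simp add: integral_mult_right)
    finally show ?thesis .
  qed
  have A: "\<bar>integral {p..p+h} (\<lambda>t. e t * (k t - k p))\<bar> \<le> (M3 * h^3 / 48 + M4 * h^4 / 128) * W * ((p + h) - p)"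
  proof -
    have "norm (integral {p..p+h} (\<lambda>t. e t * (k t - k p))) \<le> (M3 * h^3 / 48 + M4 * h^4 / 128) * W * ((p + h) - p)"
    proof (rule integral_bound[OF ph])
      show "continuous_on {p..p+h} (\<lambda>t. e t * (k t - k p))" by (intro continuous_intros ec kc)
      fix t assume t: "t \<in> {p..p+h}"
      show "norm (e t * (k t - k p)) \<le> (M3 * h^3 / 48 + M4 * h^4 / 128) * W"
        unfolding real_norm_def abs_mult using eb[OF t] kW[OF t] by (intro mult_mono) auto
    qed
    then show ?thesis by simp
  qed
  have B: "\<bar>integral {p..p+h} e\<bar> \<le> M4 * h^4 / 128 * h"
  proof -
    have ic: "cub integrable_on {p..p+h}" by (intro integrable_continuous_interval cc)
    have "integral {p..p+h} cub = 0" unfolding cub_def using cub_integral[OF h] by (rule integral_unique)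
    then have "integral {p..p+h} e = integral {p..p+h} (\<lambda>t. e t - cub t)"
      using integral_diff[OF ie ic] by simp
    moreover have "norm (integral {p..p+h} (\<lambda>t. e t - cub t)) \<le> M4 * h^4 / 128 * ((p+h) - p)"
      by (rule integral_bound[OF ph]) (use ec cc ecub in \<open>auto intro!: continuous_intros\<close>)
    ultimately show ?thesis by simp
  qed
  have "\<bar>integral {p..p+h} (\<lambda>t. e t * k t)\<bar> \<le> \<bar>integral {p..p+h} (\<lambda>t. e t * (k t - k p))\<bar> + \<bar>k p\<bar> * \<bar>integral {p..p+h} e\<bar>"
    unfolding split using abs_triangle_ineq[of "integral {p..p+h} (\<lambda>t. e t * (k t - k p))" "k p * integral {p..p+h} e"]
    by (simp add: abs_mult)
  also have "\<dots> \<le> (M3 * h^3 / 48 + M4 * h^4 / 128) * W * ((p + h) - p) + K * (M4 * h^4 / 128 * h)"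
    using A B kK by (intro add_mono mult_mono) auto
  finally show "\<bar>integral {p..p+h} (\<lambda>t. (g t - (g p * P0 ((t-p)/h) + g (p + h/2) * P1 ((t-p)/h) + g (p+h) * P2 ((t-p)/h))) * k t)\<bar>
         \<le> h * (M3 * h^3 / 48 + M4 * h^4 / 128) * W + K * (M4 * h^4 / 128 * h)"
    unfolding e_def by (simp add: algebra_simps)
qed


definition kern :: "real \<Rightarrow> real \<Rightarrow> real \<Rightarrow> real \<Rightarrow> real" where
  "kern \<gamma> t0 s2 t = 1 / ((t0 - t)^2 + s2) powr (\<gamma> / 2)"

lemma sq_pos: "s2 > 0 \<Longrightarrow> (x::real)^2 + s2 > 0"
  by (metis add_nonneg_pos zero_le_power2)

lemma kern_cont:
  assumes s2: "s2 > 0" shows "continuous_on S (kern \<gamma> t0 s2)"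
proof -
  have ne: "(t0 - t)^2 + s2 \<noteq> 0" for t using sq_pos[OF s2, of "t0 - t"] by simp
  show ?thesis unfolding kern_def by (intro continuous_intros) (auto simp: ne)
qed

lemma kern_anti:
  assumes s2: "s2 > 0" and g: "\<gamma> > 0" and le: "(t0 - t')^2 \<le> (t0 - t)^2"
  shows "kern \<gamma> t0 s2 t \<le> kern \<gamma> t0 s2 t'"
proof -
  have p1: "0 < ((t0 - t')^2 + s2) powr (\<gamma> / 2)" using sq_pos[OF s2, of "t0 - t'"] by simp
  have le2: "((t0 - t')^2 + s2) powr (\<gamma> / 2) \<le> ((t0 - t)^2 + s2) powr (\<gamma> / 2)"
    using le g sq_pos[OF s2, of "t0 - t'"] by (intro powr_mono2) auto
  have p2: "0 < ((t0 - t)^2 + s2) powr (\<gamma> / 2)" using sq_pos[OF s2, of "t0 - t"] by simp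
  show ?thesis unfolding kern_def
    by (rule divide_left_mono[OF le2]) (simp, rule mult_pos_pos[OF p2 p1])
qed

lemma kern_pos: "s2 > 0 \<Longrightarrow> kern \<gamma> t0 s2 t > 0"
  unfolding kern_def using sq_pos[of s2 "t0 - t"] by simp

lemma kern_max:
  assumes s2: "s2 > 0" and g: "\<gamma> > 0"
  shows "kern \<gamma> t0 s2 t \<le> s2 powr (- \<gamma> / 2)"
proof -
  have mm: "- \<gamma> / 2 = - (\<gamma> / 2)" by simp
  have "kern \<gamma> t0 s2 t \<le> kern \<gamma> t0 s2 t0" by (rule kern_anti[OF s2 g]) auto
  also have "\<dots> = s2 powr (- (\<gamma> / 2))" unfolding kern_def powr_minus_divide by simp
  finally show ?thesis unfolding mm .
qed

definition Vk :: "real \<Rightarrow> real \<Rightarrow> real \<Rightarrow> real \<Rightarrow> real" where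
  "Vk \<gamma> t0 s2 t = (if t \<le> t0 then kern \<gamma> t0 s2 t else 2 * s2 powr (- \<gamma> / 2) - kern \<gamma> t0 s2 t)"

lemma Vk_osc:
  assumes s2: "s2 > 0" and g: "\<gamma> > 0" and xy: "x \<le> y"
  shows "\<bar>kern \<gamma> t0 s2 y - kern \<gamma> t0 s2 x\<bar> \<le> Vk \<gamma> t0 s2 y - Vk \<gamma> t0 s2 x"
proof -
  note km = kern_max[OF s2 g]
  consider "y \<le> t0" | "t0 < x" | "x \<le> t0" "t0 < y" using xy by linarith
  then show ?thesis
  proof cases
    case 1
    have "(t0 - y)^2 \<le> (t0 - x)^2" using 1 xy by (intro power_mono) auto
    then have "kern \<gamma> t0 s2 x \<le> kern \<gamma> t0 s2 y" by (intro kern_anti[OF s2 g])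
    moreover have "Vk \<gamma> t0 s2 x = kern \<gamma> t0 s2 x" "Vk \<gamma> t0 s2 y = kern \<gamma> t0 s2 y" using 1 xy by (auto simp: Vk_def)
    ultimately show ?thesis by simp
  next
    case 2
    have "(x - t0)^2 \<le> (y - t0)^2" using 2 xy by (intro power_mono) auto
    then have "(t0 - x)^2 \<le> (t0 - y)^2" by (simp add: power2_commute)
    then have "kern \<gamma> t0 s2 y \<le> kern \<gamma> t0 s2 x" by (intro kern_anti[OF s2 g])
    moreover have "Vk \<gamma> t0 s2 x = 2 * s2 powr (- \<gamma> / 2) - kern \<gamma> t0 s2 x"
      "Vk \<gamma> t0 s2 y = 2 * s2 powr (- \<gamma> / 2) - kern \<gamma> t0 s2 y" using 2 xy by (auto simp: Vk_def)
    ultimately show ?thesis by simp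
  next
    case 3
    have "Vk \<gamma> t0 s2 x = kern \<gamma> t0 s2 x"
      "Vk \<gamma> t0 s2 y = 2 * s2 powr (- \<gamma> / 2) - kern \<gamma> t0 s2 y" using 3 by (auto simp: Vk_def)
    then show ?thesis unfolding abs_le_iff using km[of t0 x] km[of t0 y] by linarith
  qed
qed

lemma Vk_mono:
  assumes s2: "s2 > 0" and g: "\<gamma> > 0" and xy: "x \<le> y"
  shows "Vk \<gamma> t0 s2 x \<le> Vk \<gamma> t0 s2 y"
proof -
  have "0 \<le> \<bar>kern \<gamma> t0 s2 y - kern \<gamma> t0 s2 x\<bar>" by simp
  then show ?thesis using Vk_osc[OF assms, of t0] by linarith
qed

lemma Vk_bounds:
  assumes s2: "s2 > 0" and g: "\<gamma> > 0"
  shows "0 \<le> Vk \<gamma> t0 s2 x" "Vk \<gamma> t0 s2 x \<le> 2 * s2 powr (- \<gamma> / 2)"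
  using kern_max[OF s2 g, of t0 x] kern_pos[OF s2, of \<gamma> t0 x] by (auto simp: Vk_def)

lemma split_sum:
  fixes f :: "real \<Rightarrow> real"
  assumes h: "h > 0" and i: "\<And>l. l < M \<Longrightarrow> f integrable_on {\<alpha> + real l * h .. \<alpha> + real (Suc l) * h}"
  shows "f integrable_on {\<alpha> .. \<alpha> + real M * h} \<and>
         integral {\<alpha> .. \<alpha> + real M * h} f = (\<Sum>l<M. integral {\<alpha> + real l * h .. \<alpha> + real (Suc l) * h} f)"
  using i
proof (induction M)
  case 0
  have "f integrable_on cbox \<alpha> \<alpha>" by (rule integrable_on_refl)
  then have I0: "f integrable_on {\<alpha>..\<alpha>}" by (simp only: box_real)
  have i0: "integral {\<alpha>..\<alpha>} f = 0" using integral_refl[of \<alpha> f] by (simp only: box_real)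
  have e: "\<alpha> + real 0 * h = \<alpha>" by simp
  show ?case unfolding e lessThan_0 sum.empty using I0 i0 by (intro conjI)
next
  case (Suc M)
  then have ih: "f integrable_on {\<alpha> .. \<alpha> + real M * h}"
     "integral {\<alpha> .. \<alpha> + real M * h} f = (\<Sum>l<M. integral {\<alpha> + real l * h .. \<alpha> + real (Suc l) * h} f)"
    by auto
  have last: "f integrable_on {\<alpha> + real M * h .. \<alpha> + real (Suc M) * h}" using Suc.prems by auto
  have o1: "\<alpha> \<le> \<alpha> + real M * h" "\<alpha> + real M * h \<le> \<alpha> + real (Suc M) * h" using h by auto
  show ?case
  proof -
    have I: "f integrable_on {\<alpha> .. \<alpha> + real (Suc M) * h}"
      by (rule Henstock_Kurzweil_Integration.integrable_combine[OF o1 ih(1) last])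
    have eq: "integral {\<alpha> .. \<alpha> + real (Suc M) * h} f = integral {\<alpha> .. \<alpha> + real M * h} f + integral {\<alpha> + real M * h .. \<alpha> + real (Suc M) * h} f"
      using Henstock_Kurzweil_Integration.integral_combine[OF o1 I] by simp
    have s: "(\<Sum>l<Suc M. integral {\<alpha> + real l * h .. \<alpha> + real (Suc l) * h} f)
       = (\<Sum>l<M. integral {\<alpha> + real l * h .. \<alpha> + real (Suc l) * h} f) + integral {\<alpha> + real M * h .. \<alpha> + real (Suc M) * h} f"
      by (rule sum.lessThan_Suc)
    have "integral {\<alpha> .. \<alpha> + real (Suc M) * h} f = (\<Sum>l<Suc M. integral {\<alpha> + real l * h .. \<alpha> + real (Suc l) * h} f)"
      by (simp only: eq ih(2) s)
    then show ?thesis by (intro conjI[OF I])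
  qed
qed


lemma glob1d:
  fixes g g1 g2 g3 g4 :: "real \<Rightarrow> real"
  assumes ab: "\<alpha> < \<beta>" and M: "1 \<le> M"
    and d0: "\<And>t. t \<in> {\<alpha>..\<beta>} \<Longrightarrow> (g has_real_derivative g1 t) (at t within {\<alpha>..\<beta>})"
    and d1: "\<And>t. t \<in> {\<alpha>..\<beta>} \<Longrightarrow> (g1 has_real_derivative g2 t) (at t within {\<alpha>..\<beta>})"
    and d2: "\<And>t. t \<in> {\<alpha>..\<beta>} \<Longrightarrow> (g2 has_real_derivative g3 t) (at t within {\<alpha>..\<beta>})"
    and d3: "\<And>t. t \<in> {\<alpha>..\<beta>} \<Longrightarrow> (g3 has_real_derivative g4 t) (at t within {\<alpha>..\<beta>})"
    and b3: "\<And>t. t \<in> {\<alpha>..\<beta>} \<Longrightarrow> \<bar>g3 t\<bar> \<le> M3"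
    and b4: "\<And>t. t \<in> {\<alpha>..\<beta>} \<Longrightarrow> \<bar>g4 t\<bar> \<le> M4"
    and s2: "s2 > 0" and g: "\<gamma> > 0"
  shows "(\<lambda>t. (g t - IQ \<alpha> \<beta> M g t) * kern \<gamma> t0 s2 t) integrable_on {\<alpha>..\<beta>}"
    and "\<bar>integral {\<alpha>..\<beta>} (\<lambda>t. (g t - IQ \<alpha> \<beta> M g t) * kern \<gamma> t0 s2 t)\<bar>
          \<le> (M3 / 24 + 3 * M4 * (\<beta> - \<alpha>) / 128) * ((\<beta> - \<alpha>) / real M)^4 * s2 powr (- \<gamma> / 2)"
proof -
  define h where "h = (\<beta> - \<alpha>) / real M"
  have h: "h > 0" using ab M by (auto simp: h_def)
  have Mh: "real M * h = \<beta> - \<alpha>" using M by (auto simp: h_def)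
  have hle: "h \<le> \<beta> - \<alpha>" using M ab unfolding h_def by (auto simp: divide_simps)
  define K where "K = s2 powr (- \<gamma> / 2)"
  define F where "F t = (g t - IQ \<alpha> \<beta> M g t) * kern \<gamma> t0 s2 t" for t
  define V where "V l = Vk \<gamma> t0 s2 (\<alpha> + real l * h)" for l
  define A where "A = h * (M3 * h^3 / 48 + M4 * h^4 / 128)"
  define B where "B = K * (M4 * h^4 / 128 * h)"
  have M30: "M3 \<ge> 0" using b3[of \<alpha>] ab by auto
  have M40: "M4 \<ge> 0" using b4[of \<alpha>] ab by auto
  have A0: "A \<ge> 0" unfolding A_def using h M30 M40 by auto
  have elem: "F integrable_on {\<alpha> + real l * h .. \<alpha> + real (Suc l) * h} \<and>
      \<bar>integral {\<alpha> + real l * h .. \<alpha> + real (Suc l) * h} F\<bar> \<le> A * (V (Suc l) - V l) + B" if l: "l < M" for l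
  proof -
    define p where "p = \<alpha> + real l * h"
    have pp: "\<alpha> + real (Suc l) * h = p + h" by (simp add: p_def algebra_simps)
    have sub: "{p..p+h} \<subseteq> {\<alpha>..\<beta>}"
    proof -
      have "real (Suc l) * h \<le> real M * h" using l h by (intro mult_right_mono) auto
      then show ?thesis using h Mh unfolding p_def by (auto simp: algebra_simps)
    qed
    have pE: "p \<in> {p..p+h}" using h by auto
    have eqIQ: "IQ \<alpha> \<beta> M g t = g p * P0 ((t-p)/h) + g (p + h/2) * P1 ((t-p)/h) + g (p+h) * P2 ((t-p)/h)"
      if t: "t \<in> {p..p+h}" for t
    proof -
      define s where "s = (t - p) / h"
      have s: "0 \<le> s" "s \<le> 1" using t h by (auto simp: s_def divide_simps)
      have tt: "t = \<alpha> + (real (Suc l) - 1 + s) * ((\<beta> - \<alpha>) / real M)"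
        unfolding h_def[symmetric] s_def p_def using h by (simp add: field_simps)
      have pl: "\<alpha> + (real (Suc l) - 1) * ((\<beta> - \<alpha>) / real M) = p" by (simp add: p_def h_def)
      have e1: "IQ \<alpha> \<beta> M g (\<alpha> + (real (Suc l) - 1 + s) * ((\<beta> - \<alpha>) / real M)) =
         g (\<alpha> + (real (Suc l) - 1) * ((\<beta> - \<alpha>) / real M)) * P0 s
       + g (\<alpha> + (real (Suc l) - 1) * ((\<beta> - \<alpha>) / real M) + ((\<beta> - \<alpha>) / real M) / 2) * P1 s
       + g (\<alpha> + (real (Suc l) - 1) * ((\<beta> - \<alpha>) / real M) + ((\<beta> - \<alpha>) / real M)) * P2 s"
        by (rule IQ_elem[OF ab _ _ s]) (use l in auto)
      have tt': "t = \<alpha> + (real (Suc l) - 1 + s) * h" using tt unfolding h_def .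
      have pl': "\<alpha> + (real (Suc l) - 1) * h = p" using pl unfolding h_def .
      show ?thesis unfolding s_def[symmetric] using e1 unfolding h_def[symmetric] unfolding tt'[symmetric] pl' .

    qed
    have d0': "\<And>t. t \<in> {p..p+h} \<Longrightarrow> (g has_real_derivative g1 t) (at t within {p..p+h})"
      using sub by (intro has_field_derivative_subset[OF d0 sub]) auto
    have d1': "\<And>t. t \<in> {p..p+h} \<Longrightarrow> (g1 has_real_derivative g2 t) (at t within {p..p+h})"
      using sub by (intro has_field_derivative_subset[OF d1 sub]) auto
    have d2': "\<And>t. t \<in> {p..p+h} \<Longrightarrow> (g2 has_real_derivative g3 t) (at t within {p..p+h})"
      using sub by (intro has_field_derivative_subset[OF d2 sub]) auto
    have d3': "\<And>t. t \<in> {p..p+h} \<Longrightarrow> (g3 has_real_derivative g4 t) (at t within {p..p+h})"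
      using sub by (intro has_field_derivative_subset[OF d3 sub]) auto
    have b3': "\<And>t. t \<in> {p..p+h} \<Longrightarrow> \<bar>g3 t\<bar> \<le> M3" using sub b3 by auto
    have b4': "\<And>t. t \<in> {p..p+h} \<Longrightarrow> \<bar>g4 t\<bar> \<le> M4" using sub b4 by auto
    have kc: "continuous_on {p..p+h} (kern \<gamma> t0 s2)" by (rule kern_cont[OF s2])
    have kK: "\<bar>kern \<gamma> t0 s2 p\<bar> \<le> K" unfolding K_def using kern_pos[OF s2, of \<gamma> t0 p] kern_max[OF s2 g, of t0 p] by simp
    have kW: "\<bar>kern \<gamma> t0 s2 t - kern \<gamma> t0 s2 p\<bar> \<le> Vk \<gamma> t0 s2 (p + h) - Vk \<gamma> t0 s2 p" if t: "t \<in> {p..p+h}" for t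
    proof -
      have "\<bar>kern \<gamma> t0 s2 t - kern \<gamma> t0 s2 p\<bar> \<le> Vk \<gamma> t0 s2 t - Vk \<gamma> t0 s2 p"
        using t by (intro Vk_osc[OF s2 g]) auto
      also have "\<dots> \<le> Vk \<gamma> t0 s2 (p + h) - Vk \<gamma> t0 s2 p"
        using t Vk_mono[OF s2 g, of t "p + h" t0] by auto
      finally show ?thesis .
    qed
    note ei1 = elem_int(1)[OF h d0' d1' d2' d3' b3' b4' kc kW kK]
    note ei2 = elem_int(2)[OF h d0' d1' d2' d3' b3' b4' kc kW kK]
    have Feq: "F t = (g t - (g p * P0 ((t-p)/h) + g (p + h/2) * P1 ((t-p)/h) + g (p+h) * P2 ((t-p)/h))) * kern \<gamma> t0 s2 t"
      if "t \<in> {p..p+h}" for t unfolding F_def eqIQ[OF that] ..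
    have I: "F integrable_on {p..p+h}"
      using integrable_eq[OF ei1] Feq by metis
    have inteq: "integral {p..p+h} F = integral {p..p+h} (\<lambda>t. (g t - (g p * P0 ((t-p)/h) + g (p + h/2) * P1 ((t-p)/h) + g (p+h) * P2 ((t-p)/h))) * kern \<gamma> t0 s2 t)"
      by (rule integral_cong) (rule Feq)
    have V1: "V (Suc l) = Vk \<gamma> t0 s2 (p + h)" and V2: "V l = Vk \<gamma> t0 s2 p"
      unfolding V_def pp[symmetric] p_def by (simp_all add: algebra_simps)
    have "\<bar>integral {p..p+h} F\<bar> \<le> A * (V (Suc l) - V l) + B"
      unfolding A_def B_def V1 V2 inteq by (rule ei2)
    then show ?thesis using I unfolding pp p_def by blast
  qed
  have spl: "F integrable_on {\<alpha> .. \<alpha> + real M * h} \<and>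
         integral {\<alpha> .. \<alpha> + real M * h} F = (\<Sum>l<M. integral {\<alpha> + real l * h .. \<alpha> + real (Suc l) * h} F)"
    by (rule split_sum[OF h]) (use elem in blast)
  have ab': "\<alpha> + real M * h = \<beta>" using Mh by simp
  show "(\<lambda>t. (g t - IQ \<alpha> \<beta> M g t) * kern \<gamma> t0 s2 t) integrable_on {\<alpha>..\<beta>}"
    using spl unfolding ab' F_def by blast
  have "\<bar>integral {\<alpha>..\<beta>} F\<bar> = \<bar>\<Sum>l<M. integral {\<alpha> + real l * h .. \<alpha> + real (Suc l) * h} F\<bar>"
    using spl unfolding ab' by simp
  also have "\<dots> \<le> (\<Sum>l<M. \<bar>integral {\<alpha> + real l * h .. \<alpha> + real (Suc l) * h} F\<bar>)" by (rule sum_abs)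
  also have "\<dots> \<le> (\<Sum>l<M. A * (V (Suc l) - V l) + B)" by (rule sum_mono) (use elem in blast)
  also have "\<dots> = A * (\<Sum>l<M. V (Suc l) - V l) + real M * B" by (simp add: sum.distrib sum_distrib_left)
  also have "(\<Sum>l<M. V (Suc l) - V l) = V M - V 0" by (rule sum_lessThan_telescope)
  also have "V M - V 0 \<le> 2 * K"
    using Vk_bounds[OF s2 g, of t0 "\<alpha> + real M * h"] Vk_bounds[OF s2 g, of t0 "\<alpha> + real 0 * h"] unfolding V_def K_def by linarith
  then have "A * (V M - V 0) + real M * B \<le> A * (2 * K) + real M * B" using A0 by (intro add_mono mult_left_mono) auto
  also have "A * (2 * K) + real M * B \<le> (M3 / 24 + 3 * M4 * (\<beta> - \<alpha>) / 128) * h^4 * K"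
  proof -
    have K0: "K \<ge> 0" unfolding K_def by simp
    have "real M * B = K * M4 * h^4 / 128 * (real M * h)" unfolding B_def by (simp add: algebra_simps)
    then have "real M * B = (\<beta> - \<alpha>) * K * M4 * h^4 / 128" unfolding Mh by (simp add: algebra_simps)
    moreover have "A * (2 * K) \<le> 2 * K * h^4 * (M3 / 48 + M4 * (\<beta> - \<alpha>) / 128)"
    proof -
      have Aeq: "A * (2 * K) = (2 * K * h^4) * (M3 / 48 + M4 * h / 128)"
        unfolding A_def by (simp add: algebra_simps numeral_eq_Suc)
      have le: "M3 / 48 + M4 * h / 128 \<le> M3 / 48 + M4 * (\<beta> - \<alpha>) / 128"
        using hle M40 by (intro add_left_mono divide_right_mono mult_left_mono) auto
      have "(2 * K * h^4) * (M3 / 48 + M4 * h / 128) \<le> (2 * K * h^4) * (M3 / 48 + M4 * (\<beta> - \<alpha>) / 128)"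
        by (rule mult_left_mono[OF le]) (use K0 in simp)
      then show ?thesis unfolding Aeq by (simp add: algebra_simps)
    qed
    moreover have "2 * K * h^4 * (M3 / 48 + M4 * (\<beta> - \<alpha>) / 128) + (\<beta> - \<alpha>) * K * M4 * h^4 / 128
        = (M3 / 24 + 3 * M4 * (\<beta> - \<alpha>) / 128) * h^4 * K" by (simp add: field_simps)
    ultimately show ?thesis by linarith
  qed
  finally show "\<bar>integral {\<alpha>..\<beta>} (\<lambda>t. (g t - IQ \<alpha> \<beta> M g t) * kern \<gamma> t0 s2 t)\<bar>
          \<le> (M3 / 24 + 3 * M4 * (\<beta> - \<alpha>) / 128) * ((\<beta> - \<alpha>) / real M)^4 * s2 powr (- \<gamma> / 2)"
    unfolding F_def h_def[symmetric] K_def .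
qed


lemma right_int:
  fixes \<gamma> t0 \<beta> :: real
  assumes g1: "\<gamma> < 1" and tb: "t0 \<le> \<beta>"
  shows "((\<lambda>t. \<bar>t0 - t\<bar> powr (- \<gamma>)) has_integral (\<beta> - t0) powr (1 - \<gamma>) / (1 - \<gamma>)) {t0..\<beta>}"
proof -
  have "((\<lambda>t. \<bar>t0 - t\<bar> powr (- \<gamma>)) has_integral ((\<lambda>t. (t - t0) powr (1 - \<gamma>) / (1 - \<gamma>)) \<beta> - (\<lambda>t. (t - t0) powr (1 - \<gamma>) / (1 - \<gamma>)) t0)) {t0..\<beta>}"
  proof (rule fundamental_theorem_of_calculus_interior_strong[where S = "{}"])
    fix x assume x: "x \<in> {t0<..<\<beta>} - {}"
    have "((\<lambda>t. (t - t0) powr (1 - \<gamma>) / (1 - \<gamma>)) has_real_derivative (1 - \<gamma>) * (x - t0) powr (1 - \<gamma> - 1) * 1 / (1 - \<gamma>)) (at x)"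
      using x by (auto intro!: derivative_eq_intros)
    moreover have "(1 - \<gamma>) * (x - t0) powr (1 - \<gamma> - 1) * 1 / (1 - \<gamma>) = \<bar>t0 - x\<bar> powr (- \<gamma>)"
      using x g1 by simp
    ultimately show "((\<lambda>t. (t - t0) powr (1 - \<gamma>) / (1 - \<gamma>)) has_vector_derivative \<bar>t0 - x\<bar> powr (- \<gamma>)) (at x)"
      by (simp add: has_real_derivative_iff_has_vector_derivative)
  next
    show "continuous_on {t0..\<beta>} (\<lambda>t. (t - t0) powr (1 - \<gamma>) / (1 - \<gamma>))"
      using g1 by (intro continuous_intros continuous_on_powr') auto
  qed (use tb in auto)
  then show ?thesis using g1 by simp
qed

lemma left_int:
  fixes \<gamma> t0 \<alpha> :: real
  assumes g1: "\<gamma> < 1" and tb: "\<alpha> \<le> t0"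
  shows "((\<lambda>t. \<bar>t0 - t\<bar> powr (- \<gamma>)) has_integral (t0 - \<alpha>) powr (1 - \<gamma>) / (1 - \<gamma>)) {\<alpha>..t0}"
proof -
  have "((\<lambda>t. \<bar>t0 - t\<bar> powr (- \<gamma>)) has_integral ((\<lambda>t. - ((t0 - t) powr (1 - \<gamma>)) / (1 - \<gamma>)) t0 - (\<lambda>t. - ((t0 - t) powr (1 - \<gamma>)) / (1 - \<gamma>)) \<alpha>)) {\<alpha>..t0}"
  proof (rule fundamental_theorem_of_calculus_interior_strong[where S = "{}"])
    fix x assume x: "x \<in> {\<alpha><..<t0} - {}"
    have "((\<lambda>t. - ((t0 - t) powr (1 - \<gamma>)) / (1 - \<gamma>)) has_real_derivative - ((1 - \<gamma>) * (t0 - x) powr (1 - \<gamma> - 1) * (0 - 1)) / (1 - \<gamma>)) (at x)"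
      using x by (auto intro!: derivative_eq_intros)
    moreover have "- ((1 - \<gamma>) * (t0 - x) powr (1 - \<gamma> - 1) * (0 - 1)) / (1 - \<gamma>) = \<bar>t0 - x\<bar> powr (- \<gamma>)"
      using x g1 by simp
    ultimately show "((\<lambda>t. - ((t0 - t) powr (1 - \<gamma>)) / (1 - \<gamma>)) has_vector_derivative \<bar>t0 - x\<bar> powr (- \<gamma>)) (at x)"
      by (simp add: has_real_derivative_iff_has_vector_derivative)
  next
    show "continuous_on {\<alpha>..t0} (\<lambda>t. - ((t0 - t) powr (1 - \<gamma>)) / (1 - \<gamma>))"
      using g1 by (intro continuous_intros continuous_on_powr') auto
  qed (use tb in auto)
  then show ?thesis using g1 by simp
qed

lemma absint:
  fixes \<gamma> t0 \<alpha> \<beta> :: real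
  assumes g0: "0 < \<gamma>" and g1: "\<gamma> < 1" and t: "\<alpha> \<le> t0" "t0 \<le> \<beta>"
  shows "(\<lambda>t. \<bar>t0 - t\<bar> powr (- \<gamma>)) integrable_on {\<alpha>..\<beta>}"
    and "integral {\<alpha>..\<beta>} (\<lambda>t. \<bar>t0 - t\<bar> powr (- \<gamma>)) \<le> 2 * (\<beta> - \<alpha>) powr (1 - \<gamma>) / (1 - \<gamma>)"
proof -
  have hi: "((\<lambda>t. \<bar>t0 - t\<bar> powr (- \<gamma>)) has_integral (t0 - \<alpha>) powr (1 - \<gamma>) / (1 - \<gamma>) + (\<beta> - t0) powr (1 - \<gamma>) / (1 - \<gamma>)) {\<alpha>..\<beta>}"
    by (rule has_integral_combine[OF t left_int[OF g1 t(1)] right_int[OF g1 t(2)]])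
  then show "(\<lambda>t. \<bar>t0 - t\<bar> powr (- \<gamma>)) integrable_on {\<alpha>..\<beta>}" by blast
  have "(t0 - \<alpha>) powr (1 - \<gamma>) \<le> (\<beta> - \<alpha>) powr (1 - \<gamma>)" "(\<beta> - t0) powr (1 - \<gamma>) \<le> (\<beta> - \<alpha>) powr (1 - \<gamma>)"
    using t g1 by (auto intro!: powr_mono2)
  then have "(t0 - \<alpha>) powr (1 - \<gamma>) / (1 - \<gamma>) + (\<beta> - t0) powr (1 - \<gamma>) / (1 - \<gamma>) \<le> 2 * (\<beta> - \<alpha>) powr (1 - \<gamma>) / (1 - \<gamma>)"
    using g1 by (simp add: divide_simps)
  then show "integral {\<alpha>..\<beta>} (\<lambda>t. \<bar>t0 - t\<bar> powr (- \<gamma>)) \<le> 2 * (\<beta> - \<alpha>) powr (1 - \<gamma>) / (1 - \<gamma>)"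
    using integral_unique[OF hi] by simp
qed


lemma smooth_cont: "smooth2_on k S f \<Longrightarrow> continuous_on S (\<lambda>p. f (fst p) (snd p))"
  by (cases k) auto

lemma sect_x: "y \<in> {c..d} \<Longrightarrow> {t. (t, y) \<in> {a..b} \<times> {c..d}} = {a..b}" by auto
lemma sect_y: "x \<in> {a..b} \<Longrightarrow> {t. (x, t) \<in> {a..b} \<times> {c..d}} = {c..d}" by auto

lemma step_x:
  assumes "smooth2_on (Suc k) ({a..b} \<times> {c..d}) f"
  shows "\<exists>fx. (\<forall>x\<in>{a..b}. \<forall>y\<in>{c..d}. ((\<lambda>t. f t y) has_real_derivative fx x y) (at x within {a..b}))
     \<and> smooth2_on k ({a..b} \<times> {c..d}) fx"
proof -
  obtain fx fy where h: "\<forall>x y. (x, y) \<in> {a..b} \<times> {c..d} \<longrightarrow>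
           ((\<lambda>t. f t y) has_real_derivative fx x y) (at x within {t. (t, y) \<in> {a..b} \<times> {c..d}}) \<and>
           ((\<lambda>t. f x t) has_real_derivative fy x y) (at y within {t. (x, t) \<in> {a..b} \<times> {c..d}})"
    and s: "smooth2_on k ({a..b} \<times> {c..d}) fx"
    using assms by auto
  have "\<forall>x\<in>{a..b}. \<forall>y\<in>{c..d}. ((\<lambda>t. f t y) has_real_derivative fx x y) (at x within {a..b})"
  proof (intro ballI)
    fix x y assume x: "x \<in> {a..b}" and y: "y \<in> {c..d}"
    then show "((\<lambda>t. f t y) has_real_derivative fx x y) (at x within {a..b})"
      using h sect_x[OF y, of a b] by force
  qed
  then show ?thesis using s by blast
qed

lemma step_y:
  assumes "smooth2_on (Suc k) ({a..b} \<times> {c..d}) f"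
  shows "\<exists>fy. (\<forall>x\<in>{a..b}. \<forall>y\<in>{c..d}. ((\<lambda>t. f x t) has_real_derivative fy x y) (at y within {c..d}))
     \<and> smooth2_on k ({a..b} \<times> {c..d}) fy"
proof -
  obtain fx fy where h: "\<forall>x y. (x, y) \<in> {a..b} \<times> {c..d} \<longrightarrow>
           ((\<lambda>t. f t y) has_real_derivative fx x y) (at x within {t. (t, y) \<in> {a..b} \<times> {c..d}}) \<and>
           ((\<lambda>t. f x t) has_real_derivative fy x y) (at y within {t. (x, t) \<in> {a..b} \<times> {c..d}})"
    and s: "smooth2_on k ({a..b} \<times> {c..d}) fy"
    using assms by auto
  have "\<forall>x\<in>{a..b}. \<forall>y\<in>{c..d}. ((\<lambda>t. f x t) has_real_derivative fy x y) (at y within {c..d})"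
  proof (intro ballI)
    fix x y assume x: "x \<in> {a..b}" and y: "y \<in> {c..d}"
    then show "((\<lambda>t. f x t) has_real_derivative fy x y) (at y within {c..d})"
      using h sect_y[OF x, of c d] by force
  qed
  then show ?thesis using s by blast
qed

lemma cont_bound:
  fixes F :: "real \<times> real \<Rightarrow> real"
  assumes "continuous_on ({a..b} \<times> {c..d}) F"
  shows "\<exists>B. \<forall>p\<in>{a..b} \<times> {c..d}. \<bar>F p\<bar> \<le> B"
proof -
  have "compact ({a..b} \<times> {c..d} :: (real \<times> real) set)" by (intro compact_Times compact_Icc)
  then have "compact (F ` ({a..b} \<times> {c..d}))" by (rule compact_continuous_image[OF assms])
  then have "bounded (F ` ({a..b} \<times> {c..d}))" by (rule compact_imp_bounded)
  then obtain B where "\<forall>z\<in>F ` ({a..b} \<times> {c..d}). norm z \<le> B" by (auto simp: bounded_iff)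
  then show ?thesis by auto
qed

lemma derivs_x:
  assumes "smooth2_on 6 ({a..b} \<times> {c..d}) u"
  shows "\<exists>u1 u2 u3 u4 M3 M4. \<forall>x\<in>{a..b}. \<forall>y\<in>{c..d}.
       ((\<lambda>t. u t y) has_real_derivative u1 x y) (at x within {a..b}) \<and>
       ((\<lambda>t. u1 t y) has_real_derivative u2 x y) (at x within {a..b}) \<and>
       ((\<lambda>t. u2 t y) has_real_derivative u3 x y) (at x within {a..b}) \<and>
       ((\<lambda>t. u3 t y) has_real_derivative u4 x y) (at x within {a..b}) \<and>
       \<bar>u3 x y\<bar> \<le> M3 \<and> \<bar>u4 x y\<bar> \<le> M4"
proof -
  have six: "(6::nat) = Suc 5" "(5::nat) = Suc 4" "(4::nat) = Suc 3" "(3::nat) = Suc 2" by simp_all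
  obtain u1 where h1: "\<forall>x\<in>{a..b}. \<forall>y\<in>{c..d}. ((\<lambda>t. u t y) has_real_derivative u1 x y) (at x within {a..b})"
    and s1: "smooth2_on 5 ({a..b} \<times> {c..d}) u1" using step_x[of 5] assms six by metis
  obtain u2 where h2: "\<forall>x\<in>{a..b}. \<forall>y\<in>{c..d}. ((\<lambda>t. u1 t y) has_real_derivative u2 x y) (at x within {a..b})"
    and s2: "smooth2_on 4 ({a..b} \<times> {c..d}) u2" using step_x[of 4] s1 six by metis
  obtain u3 where h3: "\<forall>x\<in>{a..b}. \<forall>y\<in>{c..d}. ((\<lambda>t. u2 t y) has_real_derivative u3 x y) (at x within {a..b})"
    and s3: "smooth2_on 3 ({a..b} \<times> {c..d}) u3" using step_x[of 3] s2 six by metis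
  obtain u4 where h4: "\<forall>x\<in>{a..b}. \<forall>y\<in>{c..d}. ((\<lambda>t. u3 t y) has_real_derivative u4 x y) (at x within {a..b})"
    and s4: "smooth2_on 2 ({a..b} \<times> {c..d}) u4" using step_x[of 2] s3 six by metis
  obtain M3 where m3: "\<forall>p\<in>{a..b} \<times> {c..d}. \<bar>u3 (fst p) (snd p)\<bar> \<le> M3"
    using cont_bound[OF smooth_cont[OF s3]] by blast
  obtain M4 where m4: "\<forall>p\<in>{a..b} \<times> {c..d}. \<bar>u4 (fst p) (snd p)\<bar> \<le> M4"
    using cont_bound[OF smooth_cont[OF s4]] by blast
  show ?thesis
    by (rule exI[of _ u1], rule exI[of _ u2], rule exI[of _ u3], rule exI[of _ u4], rule exI[of _ M3], rule exI[of _ M4])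
      (use h1 h2 h3 h4 m3 m4 in force)
qed

lemma derivs_y:
  assumes "smooth2_on 6 ({a..b} \<times> {c..d}) u"
  shows "\<exists>u1 u2 u3 u4 M3 M4. \<forall>x\<in>{a..b}. \<forall>y\<in>{c..d}.
       ((\<lambda>t. u x t) has_real_derivative u1 x y) (at y within {c..d}) \<and>
       ((\<lambda>t. u1 x t) has_real_derivative u2 x y) (at y within {c..d}) \<and>
       ((\<lambda>t. u2 x t) has_real_derivative u3 x y) (at y within {c..d}) \<and>
       ((\<lambda>t. u3 x t) has_real_derivative u4 x y) (at y within {c..d}) \<and>
       \<bar>u3 x y\<bar> \<le> M3 \<and> \<bar>u4 x y\<bar> \<le> M4"
proof -
  have six: "(6::nat) = Suc 5" "(5::nat) = Suc 4" "(4::nat) = Suc 3" "(3::nat) = Suc 2" by simp_all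
  obtain u1 where h1: "\<forall>x\<in>{a..b}. \<forall>y\<in>{c..d}. ((\<lambda>t. u x t) has_real_derivative u1 x y) (at y within {c..d})"
    and s1: "smooth2_on 5 ({a..b} \<times> {c..d}) u1" using step_y[of 5] assms six by metis
  obtain u2 where h2: "\<forall>x\<in>{a..b}. \<forall>y\<in>{c..d}. ((\<lambda>t. u1 x t) has_real_derivative u2 x y) (at y within {c..d})"
    and s2: "smooth2_on 4 ({a..b} \<times> {c..d}) u2" using step_y[of 4] s1 six by metis
  obtain u3 where h3: "\<forall>x\<in>{a..b}. \<forall>y\<in>{c..d}. ((\<lambda>t. u2 x t) has_real_derivative u3 x y) (at y within {c..d})"
    and s3: "smooth2_on 3 ({a..b} \<times> {c..d}) u3" using step_y[of 3] s2 six by metis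
  obtain u4 where h4: "\<forall>x\<in>{a..b}. \<forall>y\<in>{c..d}. ((\<lambda>t. u3 x t) has_real_derivative u4 x y) (at y within {c..d})"
    and s4: "smooth2_on 2 ({a..b} \<times> {c..d}) u4" using step_y[of 2] s3 six by metis
  obtain M3 where m3: "\<forall>p\<in>{a..b} \<times> {c..d}. \<bar>u3 (fst p) (snd p)\<bar> \<le> M3"
    using cont_bound[OF smooth_cont[OF s3]] by blast
  obtain M4 where m4: "\<forall>p\<in>{a..b} \<times> {c..d}. \<bar>u4 (fst p) (snd p)\<bar> \<le> M4"
    using cont_bound[OF smooth_cont[OF s4]] by blast
  show ?thesis
    by (rule exI[of _ u1], rule exI[of _ u2], rule exI[of _ u3], rule exI[of _ u4], rule exI[of _ M3], rule exI[of _ M4])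
      (use h1 h2 h3 h4 m3 m4 in force)
qed


lemma sq_powr:
  fixes x \<gamma> :: real
  shows "(x^2) powr (\<gamma>/2) = \<bar>x\<bar> powr \<gamma>"
proof (cases "x = 0")
  case True then show ?thesis by simp
next
  case False
  then have "x^2 = \<bar>x\<bar> powr 2" using powr_realpow[of "\<bar>x\<bar>" 2] by simp
  then have "(x^2) powr (\<gamma>/2) = \<bar>x\<bar> powr (2 * (\<gamma>/2))" by (simp only: powr_powr)
  then show ?thesis by simp
qed

lemma ker_le_abs:
  fixes s s0 T e \<gamma> :: real
  assumes "s \<noteq> s0" "T \<ge> 0" "e \<ge> 0" "\<gamma> > 0"
  shows "1 / ((s0 - s)^2 + T + e) powr (\<gamma>/2) \<le> \<bar>s0 - s\<bar> powr (- \<gamma>)"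
proof -
  have p: "0 < \<bar>s0 - s\<bar> powr \<gamma>" using assms by simp
  have "((s0 - s)^2) powr (\<gamma>/2) \<le> ((s0 - s)^2 + T + e) powr (\<gamma>/2)"
    using assms by (intro powr_mono2) auto
  then have le: "\<bar>s0 - s\<bar> powr \<gamma> \<le> ((s0 - s)^2 + T + e) powr (\<gamma>/2)" by (simp add: sq_powr)
  have "1 / ((s0 - s)^2 + T + e) powr (\<gamma>/2) \<le> 1 / \<bar>s0 - s\<bar> powr \<gamma>"
    using p le by (intro divide_left_mono mult_pos_pos) auto
  also have "\<dots> = \<bar>s0 - s\<bar> powr (- \<gamma>)" by (simp add: powr_minus_divide)
  finally show ?thesis .
qed

lemma cont_sect:
  fixes A :: "real \<Rightarrow> real \<Rightarrow> real"
  assumes Ac: "continuous_on ({\<alpha>..\<beta>} \<times> {p..q}) (\<lambda>z. A (fst z) (snd z))" and t: "t \<in> {p..q}"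
  shows "continuous_on {\<alpha>..\<beta>} (\<lambda>s. A s t)"
proof -
  have "continuous_on {\<alpha>..\<beta>} (\<lambda>x. (\<lambda>z. A (fst z) (snd z)) ((\<lambda>s. (s, t)) x))"
    by (rule continuous_on_compose2[OF Ac]) (use t in \<open>auto intro!: continuous_intros\<close>)
  then show ?thesis by simp
qed

lemma cont_swap:
  fixes A :: "real \<Rightarrow> real \<Rightarrow> real"
  assumes Ac: "continuous_on ({\<alpha>..\<beta>} \<times> {p..q}) (\<lambda>z. A (fst z) (snd z))"
  shows "continuous_on ({p..q} \<times> {\<alpha>..\<beta>}) (\<lambda>z. A (snd z) (fst z))"
proof -
  have "continuous_on ({p..q} \<times> {\<alpha>..\<beta>}) (\<lambda>x. (\<lambda>z. A (fst z) (snd z)) ((\<lambda>z. (snd z, fst z)) x))"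
    by (rule continuous_on_compose2[OF Ac]) (auto intro!: continuous_intros)
  then show ?thesis by simp
qed

lemma GL:
  fixes A :: "real \<Rightarrow> real \<Rightarrow> real"
  assumes ab: "\<alpha> < \<beta>" and pq: "p \<le> q" and s0: "s0 \<in> {\<alpha>..\<beta>}" and g0: "0 < \<gamma>" and g1: "\<gamma> < 1"
    and Ac: "continuous_on ({\<alpha>..\<beta>} \<times> {p..q}) (\<lambda>z. A (fst z) (snd z))"
    and AB: "\<And>s t. s \<in> {\<alpha>..\<beta>} \<Longrightarrow> t \<in> {p..q} \<Longrightarrow> \<bar>A s t\<bar> \<le> B"
  shows "(\<lambda>t. integral {\<alpha>..\<beta>} (\<lambda>s. A s t * (1 / ((s0 - s)^2 + (t0 - t)^2) powr (\<gamma>/2)))) integrable_on {p..q}"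
    and "(\<lambda>n. integral {p..q} (\<lambda>t. integral {\<alpha>..\<beta>} (\<lambda>s. A s t * (1 / ((s0 - s)^2 + (t0 - t)^2 + inverse (real (Suc n))) powr (\<gamma>/2)))))
         \<longlonglongrightarrow> integral {p..q} (\<lambda>t. integral {\<alpha>..\<beta>} (\<lambda>s. A s t * (1 / ((s0 - s)^2 + (t0 - t)^2) powr (\<gamma>/2))))"
proof -
  define Kn where "Kn n s t = 1 / ((s0 - s)^2 + (t0 - t)^2 + inverse (real (Suc n))) powr (\<gamma>/2)" for n s t
  define K where "K s t = 1 / ((s0 - s)^2 + (t0 - t)^2) powr (\<gamma>/2)" for s t
  define Gn where "Gn n t = integral {\<alpha>..\<beta>} (\<lambda>s. A s t * Kn n s t)" for n t
  define G where "G t = integral {\<alpha>..\<beta>} (\<lambda>s. A s t * K s t)" for t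
  define J where "J = 2 * (\<beta> - \<alpha>) powr (1 - \<gamma>) / (1 - \<gamma>)"
  have B0: "B \<ge> 0" using AB[of \<alpha> p] ab pq by auto
  have Dn: "(s0 - s)^2 + (t0 - t)^2 + inverse (real (Suc n)) > 0" for n s t
    by (metis add_nonneg_nonneg add_pos_nonneg inverse_positive_iff_positive of_nat_0_less_iff zero_less_Suc zero_le_power2 add.commute)
  have Knc: "continuous_on X (\<lambda>z. Kn n (f z) (g z))" if "continuous_on X f" "continuous_on X g" for X f g n
  proof -
    have "\<And>z. (s0 - f z)^2 + (t0 - g z)^2 + inverse (real (Suc n)) \<noteq> 0" using Dn by (metis less_irrefl)
    then show ?thesis unfolding Kn_def using that by (intro continuous_intros) auto
  qed
  have Acs: "continuous_on ({p..q} \<times> {\<alpha>..\<beta>}) (\<lambda>z. A (snd z) (fst z))"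
    by (rule cont_swap[OF Ac])
  have Gnc: "continuous_on {p..q} (Gn n)" for n
  proof -
    have "continuous_on ({p..q} \<times> cbox \<alpha> \<beta>) (\<lambda>(t, s). A s t * Kn n s t)"
      unfolding case_prod_beta box_real using Acs by (intro continuous_intros Knc) auto
    from integral_continuous_on_param[OF this] show ?thesis unfolding Gn_def box_real .
  qed
  have absi: "(\<lambda>s. \<bar>s0 - s\<bar> powr (- \<gamma>)) integrable_on {\<alpha>..\<beta>}"
    and absb: "integral {\<alpha>..\<beta>} (\<lambda>s. \<bar>s0 - s\<bar> powr (- \<gamma>)) \<le> J"
    using absint[OF g0 g1, of \<alpha> s0 \<beta>] s0 unfolding J_def by auto
  have Gnb: "\<bar>Gn n t\<bar> \<le> B * J" if t: "t \<in> {p..q}" for n t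
  proof -
    define gb where "gb s = (if s = s0 then B * Kn n s0 t else B * \<bar>s0 - s\<bar> powr (- \<gamma>))" for s
    have gbi: "gb integrable_on {\<alpha>..\<beta>}"
      by (rule integrable_spike_finite[of "{s0}" _ _ "\<lambda>s. B * \<bar>s0 - s\<bar> powr (- \<gamma>)"])
        (use integrable_on_cmult_left[OF absi, of B] in \<open>auto simp: gb_def\<close>)
    have gbint: "integral {\<alpha>..\<beta>} gb = B * integral {\<alpha>..\<beta>} (\<lambda>s. \<bar>s0 - s\<bar> powr (- \<gamma>))"
    proof -
      have "integral {\<alpha>..\<beta>} gb = integral {\<alpha>..\<beta>} (\<lambda>s. B * \<bar>s0 - s\<bar> powr (- \<gamma>))"
        by (rule integral_spike[of "{s0}"]) (auto simp: gb_def)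
      then show ?thesis by simp
    qed
    have fi: "(\<lambda>s. A s t * Kn n s t) integrable_on {\<alpha>..\<beta>}"
    proof (rule integrable_continuous_interval)
      have "continuous_on {\<alpha>..\<beta>} (\<lambda>s. A s t)" by (rule cont_sect[OF Ac t])
      then show "continuous_on {\<alpha>..\<beta>} (\<lambda>s. A s t * Kn n s t)" by (intro continuous_intros Knc) auto
    qed
    have "norm (Gn n t) \<le> integral {\<alpha>..\<beta>} gb"
      unfolding Gn_def
    proof (rule integral_norm_bound_integral[OF fi gbi])
      fix s assume s: "s \<in> {\<alpha>..\<beta>}"
      have Kn0: "Kn n s t \<ge> 0" unfolding Kn_def by simp
      show "norm (A s t * Kn n s t) \<le> gb s"
      proof (cases "s = s0")
        case True then show ?thesis using AB[OF s t] Kn0 by (simp add: gb_def abs_mult mult_right_mono)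
      next
        case False
        have "Kn n s t \<le> \<bar>s0 - s\<bar> powr (- \<gamma>)" unfolding Kn_def
          by (rule ker_le_abs) (use False g0 in auto)
        then show ?thesis using AB[OF s t] Kn0 False B0 by (simp add: gb_def abs_mult mult_mono)
      qed
    qed
    also have "\<dots> \<le> B * J" unfolding gbint using absb B0 by (intro mult_left_mono) auto
    finally show ?thesis by simp
  qed
  have Gconv: "(\<lambda>n. Gn n t) \<longlonglongrightarrow> G t" if t: "t \<in> {p..q}" "t \<noteq> t0" for t
  proof -
    have D: "(s0 - s)^2 + (t0 - t)^2 > 0" for s using t(2) by (simp add: add_nonneg_pos)
    have Ktc: "continuous_on {\<alpha>..\<beta>} (\<lambda>s. A s t)" by (rule cont_sect[OF Ac t(1)])
    have Kc: "continuous_on {\<alpha>..\<beta>} (\<lambda>s. K s t)"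
    proof -
      have ne: "\<And>s. (s0 - s)^2 + (t0 - t)^2 \<noteq> 0" using D by (metis less_irrefl)
      have "continuous_on {\<alpha>..\<beta>} (\<lambda>s. 1 / ((s0 - s)^2 + (t0 - t)^2) powr (\<gamma>/2))"
        by (intro continuous_intros) (use ne t(2) in auto)
      then show ?thesis unfolding K_def .
    qed
    have f1: "(\<lambda>s. A s t * Kn n s t) integrable_on {\<alpha>..\<beta>}" for n
      by (intro integrable_continuous_interval continuous_intros Ktc Knc)
    have h1: "(\<lambda>s. B * K s t) integrable_on {\<alpha>..\<beta>}"
      by (intro integrable_continuous_interval continuous_intros Kc)
    have le1: "norm (A s t * Kn n s t) \<le> B * K s t" if s: "s \<in> {\<alpha>..\<beta>}" for n s
    proof -
      have "((s0 - s)^2 + (t0 - t)^2) powr (\<gamma>/2) \<le> ((s0 - s)^2 + (t0 - t)^2 + inverse (real (Suc n))) powr (\<gamma>/2)"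
        using g0 by (intro powr_mono2) auto
      moreover have "0 < ((s0 - s)^2 + (t0 - t)^2) powr (\<gamma>/2)" using D[of s] t(2) by simp
      ultimately have "Kn n s t \<le> K s t" unfolding Kn_def K_def
        by (intro divide_left_mono mult_pos_pos) auto
      moreover have "Kn n s t \<ge> 0" unfolding Kn_def by simp
      ultimately show ?thesis
        using AB[OF s t(1)] by (simp add: abs_mult mult_mono)
    qed
    have conv1: "(\<lambda>n. A s t * Kn n s t) \<longlonglongrightarrow> A s t * K s t" if s: "s \<in> {\<alpha>..\<beta>}" for s
    proof -
      have "(\<lambda>n. (s0 - s)^2 + (t0 - t)^2 + inverse (real (Suc n))) \<longlonglongrightarrow> (s0 - s)^2 + (t0 - t)^2"
        by (rule LIMSEQ_inverse_real_of_nat_add)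
      then have "(\<lambda>n. ((s0 - s)^2 + (t0 - t)^2 + inverse (real (Suc n))) powr (\<gamma>/2)) \<longlonglongrightarrow> ((s0 - s)^2 + (t0 - t)^2) powr (\<gamma>/2)"
        by (rule tendsto_powr[OF _ tendsto_const]) (use D[of s] in auto)
      then have "(\<lambda>n. 1 / ((s0 - s)^2 + (t0 - t)^2 + inverse (real (Suc n))) powr (\<gamma>/2)) \<longlonglongrightarrow> 1 / ((s0 - s)^2 + (t0 - t)^2) powr (\<gamma>/2)"
        using D[of s] by (intro tendsto_divide tendsto_const) auto
      then show ?thesis unfolding Kn_def K_def by (intro tendsto_mult tendsto_const)
    qed
    have "(\<lambda>n. integral {\<alpha>..\<beta>} (\<lambda>s. A s t * Kn n s t)) \<longlonglongrightarrow> integral {\<alpha>..\<beta>} (\<lambda>s. A s t * K s t)"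
      by (rule dominated_convergence(2)[OF f1 h1 le1 conv1])
    then show ?thesis unfolding Gn_def G_def .
  qed
  define Gn' where "Gn' n t = (if t = t0 then 0 else Gn n t)" for n t
  define G' where "G' t = (if t = t0 then 0 else G t)" for t
  have f2: "Gn' n integrable_on {p..q}" for n
    by (rule integrable_spike_finite[of "{t0}" _ _ "Gn n"]) (auto simp: Gn'_def intro: integrable_continuous_interval Gnc)
  have h2: "(\<lambda>t. B * J) integrable_on {p..q}" by (rule integrable_const_ivl)
  have le2: "norm (Gn' n t) \<le> B * J" if "t \<in> {p..q}" for n t
  proof (cases "t = t0")
    case True
    have "0 \<le> J" using absb absi
      by (metis (no_types, lifting) Henstock_Kurzweil_Integration.integral_nonneg abs_ge_zero order_trans powr_ge_zero)
    then show ?thesis using True B0 by (simp add: Gn'_def)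
  next
    case False then show ?thesis using Gnb[OF that, of n] by (simp add: Gn'_def)
  qed
  have conv2: "(\<lambda>n. Gn' n t) \<longlonglongrightarrow> G' t" if t: "t \<in> {p..q}" for t
  proof (cases "t = t0")
    case True then show ?thesis by (simp add: Gn'_def G'_def)
  next
    case False then show ?thesis using Gconv[OF t False] by (simp add: Gn'_def G'_def)
  qed
  note dc = dominated_convergence[OF f2 h2 le2 conv2]
  have e1: "integral {p..q} (Gn' n) = integral {p..q} (Gn n)" for n
    by (rule integral_spike[of "{t0}"]) (auto simp: Gn'_def)
  have e2: "integral {p..q} G' = integral {p..q} G"
    by (rule integral_spike[of "{t0}"]) (auto simp: G'_def)
  have "G integrable_on {p..q}"
  proof (rule integrable_spike_finite[of "{t0}" _ _ G'])
    show "G' integrable_on {p..q}" by (rule dc(1))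
  qed (auto simp: G'_def)
  then show "(\<lambda>t. integral {\<alpha>..\<beta>} (\<lambda>s. A s t * (1 / ((s0 - s)^2 + (t0 - t)^2) powr (\<gamma>/2)))) integrable_on {p..q}"
    unfolding G_def K_def .
  from dc(2) show "(\<lambda>n. integral {p..q} (\<lambda>t. integral {\<alpha>..\<beta>} (\<lambda>s. A s t * (1 / ((s0 - s)^2 + (t0 - t)^2 + inverse (real (Suc n))) powr (\<gamma>/2)))))
         \<longlonglongrightarrow> integral {p..q} (\<lambda>t. integral {\<alpha>..\<beta>} (\<lambda>s. A s t * (1 / ((s0 - s)^2 + (t0 - t)^2) powr (\<gamma>/2))))"
    unfolding e1 e2 Gn_def G_def Kn_def K_def .
qed


lemma swapK:
  fixes A :: "real \<Rightarrow> real \<Rightarrow> real"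
  assumes ab: "a < b" and cd: "c < d" and xi: "xi \<in> {a..b}" and yj: "yj \<in> {c..d}"
    and g0: "0 < \<gamma>" and g1: "\<gamma> < 1"
    and Ac: "continuous_on ({a..b} \<times> {c..d}) (\<lambda>z. A (fst z) (snd z))"
  shows "(\<lambda>y. integral {a..b} (\<lambda>x. A x y * (1 / ((xi - x)^2 + (yj - y)^2) powr (\<gamma>/2)))) integrable_on {c..d}"
    and "(\<lambda>x. integral {c..d} (\<lambda>y. A x y * (1 / ((xi - x)^2 + (yj - y)^2) powr (\<gamma>/2)))) integrable_on {a..b}"
    and "integral {c..d} (\<lambda>y. integral {a..b} (\<lambda>x. A x y * (1 / ((xi - x)^2 + (yj - y)^2) powr (\<gamma>/2))))
       = integral {a..b} (\<lambda>x. integral {c..d} (\<lambda>y. A x y * (1 / ((xi - x)^2 + (yj - y)^2) powr (\<gamma>/2))))"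
proof -
  obtain B where B: "\<forall>p\<in>{a..b} \<times> {c..d}. \<bar>A (fst p) (snd p)\<bar> \<le> B"
    using cont_bound[OF Ac] by blast
  have AB: "\<And>s t. s \<in> {a..b} \<Longrightarrow> t \<in> {c..d} \<Longrightarrow> \<bar>A s t\<bar> \<le> B" using B by force
  have AB2: "\<And>s t. s \<in> {c..d} \<Longrightarrow> t \<in> {a..b} \<Longrightarrow> \<bar>A t s\<bar> \<le> B" using B by force
  have Ac2: "continuous_on ({c..d} \<times> {a..b}) (\<lambda>z. A (snd z) (fst z))" by (rule cont_swap[OF Ac])
  have abl: "a \<le> b" "c \<le> d" using ab cd by auto
  note G1 = GL[where A = A and \<alpha> = a and \<beta> = b and p = c and q = d and ?s0.0 = xi and ?t0.0 = yj and B = B, OF ab abl(2) xi g0 g1 Ac AB]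
  note G2 = GL[where A = "\<lambda>s t. A t s" and \<alpha> = c and \<beta> = d and p = a and q = b and ?s0.0 = yj and ?t0.0 = xi and B = B, OF cd abl(1) yj g0 g1 Ac2 AB2]
  have cm: "\<And>x y e. (yj - y)^2 + (xi - x)^2 + e = (xi - x)^2 + (yj - y)^2 + e"
    "\<And>x y. (yj - y)^2 + (xi - x)^2 = (xi - x)^2 + (yj - y)^2" by simp_all
  show "(\<lambda>y. integral {a..b} (\<lambda>x. A x y * (1 / ((xi - x)^2 + (yj - y)^2) powr (\<gamma>/2)))) integrable_on {c..d}"
    using G1(1) .
  show "(\<lambda>x. integral {c..d} (\<lambda>y. A x y * (1 / ((xi - x)^2 + (yj - y)^2) powr (\<gamma>/2)))) integrable_on {a..b}"
    using G2(1) unfolding cm .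
  have L1: "(\<lambda>n. integral {c..d} (\<lambda>y. integral {a..b} (\<lambda>x. A x y * (1 / ((xi - x)^2 + (yj - y)^2 + inverse (real (Suc n))) powr (\<gamma>/2)))))
         \<longlonglongrightarrow> integral {c..d} (\<lambda>y. integral {a..b} (\<lambda>x. A x y * (1 / ((xi - x)^2 + (yj - y)^2) powr (\<gamma>/2))))"
    using G1(2) .
  have L2: "(\<lambda>n. integral {a..b} (\<lambda>x. integral {c..d} (\<lambda>y. A x y * (1 / ((xi - x)^2 + (yj - y)^2 + inverse (real (Suc n))) powr (\<gamma>/2)))))
         \<longlonglongrightarrow> integral {a..b} (\<lambda>x. integral {c..d} (\<lambda>y. A x y * (1 / ((xi - x)^2 + (yj - y)^2) powr (\<gamma>/2))))"
    using G2(2) unfolding cm .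
  have EQ: "integral {c..d} (\<lambda>y. integral {a..b} (\<lambda>x. A x y * (1 / ((xi - x)^2 + (yj - y)^2 + inverse (real (Suc n))) powr (\<gamma>/2))))
      = integral {a..b} (\<lambda>x. integral {c..d} (\<lambda>y. A x y * (1 / ((xi - x)^2 + (yj - y)^2 + inverse (real (Suc n))) powr (\<gamma>/2))))" for n
  proof -
    have Dn: "(xi - x)^2 + (yj - y)^2 + inverse (real (Suc n)) \<noteq> 0" for x y
      by (metis add_nonneg_nonneg add_pos_nonneg inverse_positive_iff_positive of_nat_0_less_iff zero_less_Suc zero_le_power2 add.commute less_irrefl)
    have "continuous_on (cbox (a, c) (b, d)) (\<lambda>(x, y). A x y * (1 / ((xi - x)^2 + (yj - y)^2 + inverse (real (Suc n))) powr (\<gamma>/2)))"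
      unfolding cbox_Pair_eq box_real case_prod_beta using Ac by (intro continuous_intros) (auto simp del: of_nat_Suc simp: Dn)
    from integral_swap_continuous[OF this] show ?thesis unfolding box_real by simp
  qed
  show "integral {c..d} (\<lambda>y. integral {a..b} (\<lambda>x. A x y * (1 / ((xi - x)^2 + (yj - y)^2) powr (\<gamma>/2))))
       = integral {a..b} (\<lambda>x. integral {c..d} (\<lambda>y. A x y * (1 / ((xi - x)^2 + (yj - y)^2) powr (\<gamma>/2))))"
    using L1 unfolding EQ using L2 by (rule LIMSEQ_unique)
qed


lemma int_bound_spike:
  fixes F :: "real \<Rightarrow> real"
  assumes Fi: "F integrable_on {c..d}" and gi: "(\<lambda>y. \<bar>t0 - y\<bar> powr (- \<gamma>)) integrable_on {c..d}"
    and b: "\<And>y. y \<in> {c..d} \<Longrightarrow> y \<noteq> t0 \<Longrightarrow> \<bar>F y\<bar> \<le> Cc * \<bar>t0 - y\<bar> powr (- \<gamma>)"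
  shows "\<bar>integral {c..d} F\<bar> \<le> Cc * integral {c..d} (\<lambda>y. \<bar>t0 - y\<bar> powr (- \<gamma>))"
proof -
  define gB where "gB y = (if y = t0 then \<bar>F t0\<bar> else Cc * \<bar>t0 - y\<bar> powr (- \<gamma>))" for y
  have gBi: "gB integrable_on {c..d}"
  proof (rule integrable_spike_finite[of "{t0}" _ _ "\<lambda>y. Cc * \<bar>t0 - y\<bar> powr (- \<gamma>)"])
    show "(\<lambda>y. Cc * \<bar>t0 - y\<bar> powr (- \<gamma>)) integrable_on {c..d}"
      using integrable_on_cmult_left[OF gi, of Cc] by simp
  qed (auto simp: gB_def)
  have "norm (integral {c..d} F) \<le> integral {c..d} gB"
    by (rule integral_norm_bound_integral[OF Fi gBi]) (auto simp: gB_def b)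
  also have "integral {c..d} gB = integral {c..d} (\<lambda>y. Cc * \<bar>t0 - y\<bar> powr (- \<gamma>))"
    by (rule integral_spike[of "{t0}"]) (auto simp: gB_def)
  also have "\<dots> = Cc * integral {c..d} (\<lambda>y. \<bar>t0 - y\<bar> powr (- \<gamma>))" by simp
  finally show ?thesis by simp
qed

lemma uQ_decomp:
  "uQ u a b c d Mx My x y =
     (\<Sum>r = 0..2 * My. phiQ c d My r y * IQ a b Mx (\<lambda>x. u x (node c ((d - c) / real My) (real r / 2))) x)"
  unfolding uQ_def IQ_def
  by (subst sum.swap) (simp add: sum_distrib_left mult_ac)

lemma node_in:
  assumes "c < d" "1 \<le> My" "r \<le> 2 * My"
  shows "node c ((d - c) / real My) (real r / 2) \<in> {c..d}"
proof -
  have h: "(d - c) / real My > 0" using assms by auto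
  have "real r / 2 * ((d - c) / real My) \<le> real My * ((d - c) / real My)"
    using assms h by (intro mult_right_mono) auto
  also have "\<dots> = d - c" using assms by auto
  finally show ?thesis unfolding node_def using assms h by auto
qed

lemma IQ_cont2:
  fixes u :: "real \<Rightarrow> real \<Rightarrow> real"
  assumes cd: "c < d" and My: "1 \<le> My"
    and uc: "continuous_on ({a..b} \<times> {c..d}) (\<lambda>z. u (fst z) (snd z))"
  shows "continuous_on ({a..b} \<times> {c..d}) (\<lambda>z. IQ c d My (u (fst z)) (snd z))"
  unfolding IQ_def
proof (intro continuous_on_sum continuous_intros)
  fix r assume r: "r \<in> {0..2 * My}"
  show "continuous_on ({a..b} \<times> {c..d}) (\<lambda>z. phiQ c d My r (snd z))"
    by (rule continuous_on_compose2[OF phiQ_cont[OF cd My, of r]]) (auto intro!: continuous_intros)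
  have "continuous_on ({a..b} \<times> {c..d}) (\<lambda>z. (\<lambda>z. u (fst z) (snd z)) ((\<lambda>z. (fst z, node c ((d - c) / real My) (real r / 2))) z))"
    by (rule continuous_on_compose2[OF uc]) (use node_in[OF cd My, of r] r in \<open>auto intro!: continuous_intros\<close>)
  then show "continuous_on ({a..b} \<times> {c..d}) (\<lambda>z. u (fst z) (node c ((d - c) / real My) (real r / 2)))" by simp
qed


lemma main_bound:
  fixes u :: "real \<Rightarrow> real \<Rightarrow> real"
  assumes ab: "a < b" and cd: "c < d" and g0: "0 < \<gamma>" and g1: "\<gamma> < 1"
    and Mx: "1 \<le> Mx" and My: "1 \<le> My"
    and xi: "a < xi" "xi < b" and yj: "c < yj" "yj < d"
    and uc: "continuous_on ({a..b} \<times> {c..d}) (\<lambda>z. u (fst z) (snd z))"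
    and dx: "\<forall>x\<in>{a..b}. \<forall>y\<in>{c..d}.
       ((\<lambda>t. u t y) has_real_derivative ux1 x y) (at x within {a..b}) \<and>
       ((\<lambda>t. ux1 t y) has_real_derivative ux2 x y) (at x within {a..b}) \<and>
       ((\<lambda>t. ux2 t y) has_real_derivative ux3 x y) (at x within {a..b}) \<and>
       ((\<lambda>t. ux3 t y) has_real_derivative ux4 x y) (at x within {a..b}) \<and>
       \<bar>ux3 x y\<bar> \<le> MX3 \<and> \<bar>ux4 x y\<bar> \<le> MX4"
    and dy: "\<forall>x\<in>{a..b}. \<forall>y\<in>{c..d}.
       ((\<lambda>t. u x t) has_real_derivative uy1 x y) (at y within {c..d}) \<and>
       ((\<lambda>t. uy1 x t) has_real_derivative uy2 x y) (at y within {c..d}) \<and>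
       ((\<lambda>t. uy2 x t) has_real_derivative uy3 x y) (at y within {c..d}) \<and>
       ((\<lambda>t. uy3 x t) has_real_derivative uy4 x y) (at y within {c..d}) \<and>
       \<bar>uy3 x y\<bar> \<le> MY3 \<and> \<bar>uy4 x y\<bar> \<le> MY4"
  shows "\<bar>integral {c..d} (\<lambda>y. integral {a..b} (\<lambda>x. (u x y - uQ u a b c d Mx My x y) / ((xi - x)\<^sup>2 + (yj - y)\<^sup>2) powr (\<gamma> / 2)))\<bar>
     \<le> 3 * (MX3 / 24 + 3 * MX4 * (b - a) / 128) * ((b - a) / real Mx)^4 * (2 * (d - c) powr (1 - \<gamma>) / (1 - \<gamma>))
       + (MY3 / 24 + 3 * MY4 * (d - c) / 128) * ((d - c) / real My)^4 * (2 * (b - a) powr (1 - \<gamma>) / (1 - \<gamma>))"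
    (is "\<bar>?I\<bar> \<le> ?R")
proof -
  define hx where "hx = (b - a) / real Mx"
  define hy where "hy = (d - c) / real My"
  define CX where "CX = MX3 / 24 + 3 * MX4 * (b - a) / 128"
  define CY where "CY = MY3 / 24 + 3 * MY4 * (d - c) / 128"
  define JX where "JX = 2 * (b - a) powr (1 - \<gamma>) / (1 - \<gamma>)"
  define JY where "JY = 2 * (d - c) powr (1 - \<gamma>) / (1 - \<gamma>)"
  define K where "K x y = 1 / ((xi - x)\<^sup>2 + (yj - y)\<^sup>2) powr (\<gamma> / 2)" for x y
  define Ae where "Ae x y = u x y - IQ c d My (u x) y" for x y
  define yr where "yr r = node c hy (real r / 2)" for r
  define Be where "Be r x = u x (yr r) - IQ a b Mx (\<lambda>x. u x (yr r)) x" for r x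
  define F where "F y = integral {a..b} (\<lambda>x. (u x y - uQ u a b c d Mx My x y) / ((xi - x)\<^sup>2 + (yj - y)\<^sup>2) powr (\<gamma> / 2))" for y
  have xi': "xi \<in> {a..b}" and yj': "yj \<in> {c..d}" using xi yj by auto
  have aI: "a \<in> {a..b}" and cI: "c \<in> {c..d}" using ab cd by auto
  note dxa = bspec[OF bspec[OF dx aI] cI]
  note dya = bspec[OF bspec[OF dy aI] cI]
  have "\<bar>ux3 a c\<bar> \<le> MX3" "\<bar>ux4 a c\<bar> \<le> MX4" "\<bar>uy3 a c\<bar> \<le> MY3" "\<bar>uy4 a c\<bar> \<le> MY4"
    using dxa dya by blast+
  then have MX30: "MX3 \<ge> 0" "MX4 \<ge> 0" and MY30: "MY3 \<ge> 0" "MY4 \<ge> 0"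
    by (meson abs_ge_zero order_trans)+
  have CX0: "CX \<ge> 0" "CY \<ge> 0" unfolding CX_def CY_def using MX30 MY30 ab cd by auto
  have J0: "JX \<ge> 0" "JY \<ge> 0" unfolding JX_def JY_def using g1 by auto
  have R0: "?R \<ge> 0" using CX0 J0 unfolding CX_def[symmetric] CY_def[symmetric] JX_def[symmetric] JY_def[symmetric]
    by (intro add_nonneg_nonneg mult_nonneg_nonneg) auto
  have yr_in: "yr r \<in> {c..d}" if "r \<in> {0..2 * My}" for r
    unfolding yr_def hy_def using node_in[OF cd My, of r] that by auto
  have IQc: "IQ c d My (u x) y = (\<Sum>r = 0..2 * My. phiQ c d My r y * u x (yr r))" for x y
    unfolding IQ_def yr_def hy_def ..
  have decomp: "(u x y - uQ u a b c d Mx My x y) / ((xi - x)\<^sup>2 + (yj - y)\<^sup>2) powr (\<gamma> / 2)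
      = Ae x y * K x y + (\<Sum>r = 0..2 * My. phiQ c d My r y * (Be r x * K x y))" for x y
  proof -
    have e1: "(\<Sum>r = 0..2 * My. phiQ c d My r y * Be r x) = (\<Sum>r = 0..2 * My. phiQ c d My r y * u x (yr r))
        - (\<Sum>r = 0..2 * My. phiQ c d My r y * IQ a b Mx (\<lambda>x. u x (yr r)) x)"
      unfolding Be_def by (simp add: right_diff_distrib sum_subtractf)
    have e2: "uQ u a b c d Mx My x y = (\<Sum>r = 0..2 * My. phiQ c d My r y * IQ a b Mx (\<lambda>x. u x (yr r)) x)"
      unfolding uQ_decomp yr_def hy_def ..
    have e3: "Ae x y = u x y - (\<Sum>r = 0..2 * My. phiQ c d My r y * u x (yr r))" unfolding Ae_def IQc ..
    have e4: "u x y - uQ u a b c d Mx My x y = Ae x y + (\<Sum>r = 0..2 * My. phiQ c d My r y * Be r x)"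
      using e1 e2 e3 by linarith
    have "(u x y - uQ u a b c d Mx My x y) / ((xi - x)\<^sup>2 + (yj - y)\<^sup>2) powr (\<gamma> / 2) = (u x y - uQ u a b c d Mx My x y) * K x y"
      unfolding K_def by simp
    also have "\<dots> = (Ae x y + (\<Sum>r = 0..2 * My. phiQ c d My r y * Be r x)) * K x y" unfolding e4 ..
    also have "\<dots> = Ae x y * K x y + (\<Sum>r = 0..2 * My. phiQ c d My r y * (Be r x * K x y))"
      by (simp add: distrib_right sum_distrib_right mult.assoc)
    finally show ?thesis .
  qed
  show ?thesis
  proof (cases "F integrable_on {c..d}")
    case False
    then have "?I = 0" unfolding F_def[symmetric] by (simp add: not_integrable_integral)
    then show ?thesis using R0 by simp
  next
    case Fi: True
    have Aec: "continuous_on ({a..b} \<times> {c..d}) (\<lambda>z. Ae (fst z) (snd z))"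
      unfolding Ae_def using uc IQ_cont2[OF cd My uc] by (intro continuous_intros)
    note SW = swapK[OF ab cd xi' yj' g0 g1 Aec]
    define FA where "FA y = integral {a..b} (\<lambda>x. Ae x y * K x y)" for y
    define HA where "HA x = integral {c..d} (\<lambda>y. Ae x y * K x y)" for x
    have FAi: "FA integrable_on {c..d}" using SW(1) unfolding FA_def K_def .
    have HAi: "HA integrable_on {a..b}" using SW(2) unfolding HA_def K_def .
    have FAHA: "integral {c..d} FA = integral {a..b} HA" using SW(3) unfolding FA_def HA_def K_def .
    have FBb: "\<bar>F y - FA y\<bar> \<le> (3 * CX * hx^4) * \<bar>yj - y\<bar> powr (- \<gamma>)" if y: "y \<in> {c..d}" "y \<noteq> yj" for y
    proof -
      define s2 where "s2 = (yj - y)\<^sup>2"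
      have s2: "s2 > 0" using y(2) unfolding s2_def by simp
      have Kk: "K x y = kern \<gamma> xi s2 x" for x unfolding K_def kern_def s2_def ..
      have GB: "(\<lambda>t. (u t (yr r) - IQ a b Mx (\<lambda>x. u x (yr r)) t) * kern \<gamma> xi s2 t) integrable_on {a..b}
          \<and> \<bar>integral {a..b} (\<lambda>t. (u t (yr r) - IQ a b Mx (\<lambda>x. u x (yr r)) t) * kern \<gamma> xi s2 t)\<bar>
           \<le> CX * hx^4 * s2 powr (- \<gamma> / 2)" if r: "r \<in> {0..2 * My}" for r
      proof -
        have yrr: "yr r \<in> {c..d}" by (rule yr_in[OF r])
        have D: "\<And>t. t \<in> {a..b} \<Longrightarrow>
          ((\<lambda>t. u t (yr r)) has_real_derivative ux1 t (yr r)) (at t within {a..b}) \<and>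
          ((\<lambda>t'. ux1 t' (yr r)) has_real_derivative ux2 t (yr r)) (at t within {a..b}) \<and>
          ((\<lambda>t'. ux2 t' (yr r)) has_real_derivative ux3 t (yr r)) (at t within {a..b}) \<and>
          ((\<lambda>t'. ux3 t' (yr r)) has_real_derivative ux4 t (yr r)) (at t within {a..b}) \<and>
          \<bar>ux3 t (yr r)\<bar> \<le> MX3 \<and> \<bar>ux4 t (yr r)\<bar> \<le> MX4"
          using dx yrr by blast
        note G = glob1d[where g = "\<lambda>t. u t (yr r)" and ?g1.0 = "\<lambda>t. ux1 t (yr r)" and ?g2.0 = "\<lambda>t. ux2 t (yr r)"
            and ?g3.0 = "\<lambda>t. ux3 t (yr r)" and ?g4.0 = "\<lambda>t. ux4 t (yr r)" and ?M3.0 = MX3 and ?M4.0 = MX4 and ?s2.0 = s2 and ?t0.0 = xi and \<gamma> = \<gamma>,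
            OF ab Mx _ _ _ _ _ _ s2 g0]
        show ?thesis using G[OF conjunct1[OF D] conjunct1[OF conjunct2[OF D]] conjunct1[OF conjunct2[OF conjunct2[OF D]]]
            conjunct1[OF conjunct2[OF conjunct2[OF conjunct2[OF D]]]] conjunct1[OF conjunct2[OF conjunct2[OF conjunct2[OF conjunct2[OF D]]]]]
            conjunct2[OF conjunct2[OF conjunct2[OF conjunct2[OF conjunct2[OF D]]]]]]
          unfolding CX_def hx_def by blast
      qed
      have Aei: "(\<lambda>x. Ae x y * K x y) integrable_on {a..b}"
      proof (rule integrable_continuous_interval)
        have "continuous_on {a..b} (\<lambda>x. Ae x y)" by (rule cont_sect[OF Aec y(1)])
        then show "continuous_on {a..b} (\<lambda>x. Ae x y * K x y)"
          unfolding Kk by (intro continuous_intros kern_cont[OF s2])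
      qed
      have Bri: "(\<lambda>x. Be r x * K x y) integrable_on {a..b}" if "r \<in> {0..2 * My}" for r
        using GB[OF that] unfolding Be_def Kk by blast
      have Bri2: "(\<lambda>x. phiQ c d My r y * (Be r x * K x y)) integrable_on {a..b}" if "r \<in> {0..2 * My}" for r
        using integrable_on_cmult_left[OF Bri[OF that], of "phiQ c d My r y"] by simp
      have "F y = integral {a..b} (\<lambda>x. Ae x y * K x y + (\<Sum>r = 0..2 * My. phiQ c d My r y * (Be r x * K x y)))"
        unfolding F_def decomp ..
      also have "\<dots> = FA y + (\<Sum>r = 0..2 * My. phiQ c d My r y * integral {a..b} (\<lambda>x. Be r x * K x y))"
      proof -
        have i2: "(\<lambda>x. \<Sum>r = 0..2 * My. phiQ c d My r y * (Be r x * K x y)) integrable_on {a..b}"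
          by (rule integrable_sum) (auto intro!: Bri2)
        have "integral {a..b} (\<lambda>x. \<Sum>r = 0..2 * My. phiQ c d My r y * (Be r x * K x y))
            = (\<Sum>r = 0..2 * My. integral {a..b} (\<lambda>x. phiQ c d My r y * (Be r x * K x y)))"
          by (rule integral_sum) (auto intro!: Bri2)
        also have "\<dots> = (\<Sum>r = 0..2 * My. phiQ c d My r y * integral {a..b} (\<lambda>x. Be r x * K x y))"
          by (simp add: integral_mult_right)
        finally show ?thesis unfolding FA_def using integral_add[OF Aei i2] by simp
      qed
      finally have Fy: "F y - FA y = (\<Sum>r = 0..2 * My. phiQ c d My r y * integral {a..b} (\<lambda>x. Be r x * K x y))" by simp
      have "\<bar>F y - FA y\<bar> \<le> (\<Sum>r = 0..2 * My. \<bar>phiQ c d My r y\<bar> * \<bar>integral {a..b} (\<lambda>x. Be r x * K x y)\<bar>)"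
        unfolding Fy by (rule order_trans[OF sum_abs]) (simp add: abs_mult)
      also have "\<dots> \<le> (\<Sum>r = 0..2 * My. \<bar>phiQ c d My r y\<bar> * (CX * hx^4 * s2 powr (- \<gamma> / 2)))"
      proof (rule sum_mono, rule mult_left_mono)
        fix r assume "r \<in> {0..2 * My}"
        then show "\<bar>integral {a..b} (\<lambda>x. Be r x * K x y)\<bar> \<le> CX * hx^4 * s2 powr (- \<gamma> / 2)"
          using GB unfolding Be_def Kk by blast
      qed simp
      also have "\<dots> = (\<Sum>r = 0..2 * My. \<bar>phiQ c d My r y\<bar>) * (CX * hx^4 * s2 powr (- \<gamma> / 2))"
        by (simp add: sum_distrib_right)
      also have "\<dots> \<le> 3 * (CX * hx^4 * s2 powr (- \<gamma> / 2))"
        using phiQ_sum_abs[OF cd My y(1)] CX0 by (intro mult_right_mono) auto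
      also have "s2 powr (- \<gamma> / 2) = \<bar>yj - y\<bar> powr (- \<gamma>)" unfolding s2_def using sq_powr[of "yj - y" "- \<gamma>"] by simp
      finally show ?thesis by (simp add: algebra_simps)
    qed
    have FB: "\<bar>integral {c..d} (\<lambda>y. F y - FA y)\<bar> \<le> 3 * CX * hx^4 * JY"
    proof -
      have "\<bar>integral {c..d} (\<lambda>y. F y - FA y)\<bar> \<le> (3 * CX * hx^4) * integral {c..d} (\<lambda>y. \<bar>yj - y\<bar> powr (- \<gamma>))"
        by (rule int_bound_spike[OF integrable_diff[OF Fi FAi] absint(1)[OF g0 g1 yj'[unfolded atLeastAtMost_iff, THEN conjunct1] yj'[unfolded atLeastAtMost_iff, THEN conjunct2]] FBb])
      also have "\<dots> \<le> (3 * CX * hx^4) * JY" unfolding JY_def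
        using absint(2)[OF g0 g1, of c yj d] yj' CX0 by (intro mult_left_mono) auto
      finally show ?thesis .
    qed
    have HAb: "\<bar>HA x\<bar> \<le> (CY * hy^4) * \<bar>xi - x\<bar> powr (- \<gamma>)" if x: "x \<in> {a..b}" "x \<noteq> xi" for x
    proof -
      define s2 where "s2 = (xi - x)\<^sup>2"
      have s2: "s2 > 0" using x(2) unfolding s2_def by simp
      have Kk: "K x y = kern \<gamma> yj s2 y" for y unfolding K_def kern_def s2_def by (simp add: add.commute)
      have D: "\<And>t. t \<in> {c..d} \<Longrightarrow>
          ((\<lambda>t. u x t) has_real_derivative uy1 x t) (at t within {c..d}) \<and>
          ((\<lambda>t'. uy1 x t') has_real_derivative uy2 x t) (at t within {c..d}) \<and>
          ((\<lambda>t'. uy2 x t') has_real_derivative uy3 x t) (at t within {c..d}) \<and>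
          ((\<lambda>t'. uy3 x t') has_real_derivative uy4 x t) (at t within {c..d}) \<and>
          \<bar>uy3 x t\<bar> \<le> MY3 \<and> \<bar>uy4 x t\<bar> \<le> MY4"
        using dy x(1) by blast
      note G = glob1d[where g = "\<lambda>t. u x t" and ?g1.0 = "\<lambda>t. uy1 x t" and ?g2.0 = "\<lambda>t. uy2 x t"
            and ?g3.0 = "\<lambda>t. uy3 x t" and ?g4.0 = "\<lambda>t. uy4 x t" and ?M3.0 = MY3 and ?M4.0 = MY4 and ?s2.0 = s2 and ?t0.0 = yj and \<gamma> = \<gamma>,
            OF cd My _ _ _ _ _ _ s2 g0]
      have GA: "\<bar>integral {c..d} (\<lambda>t. (u x t - IQ c d My (\<lambda>t. u x t) t) * kern \<gamma> yj s2 t)\<bar> \<le> CY * hy^4 * s2 powr (- \<gamma> / 2)"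
        using G(2)[OF conjunct1[OF D] conjunct1[OF conjunct2[OF D]] conjunct1[OF conjunct2[OF conjunct2[OF D]]]
            conjunct1[OF conjunct2[OF conjunct2[OF conjunct2[OF D]]]] conjunct1[OF conjunct2[OF conjunct2[OF conjunct2[OF conjunct2[OF D]]]]]
            conjunct2[OF conjunct2[OF conjunct2[OF conjunct2[OF conjunct2[OF D]]]]]]
        unfolding CY_def hy_def .
      have "HA x = integral {c..d} (\<lambda>t. (u x t - IQ c d My (\<lambda>t. u x t) t) * kern \<gamma> yj s2 t)"
        unfolding HA_def Ae_def Kk by simp
      moreover have "s2 powr (- \<gamma> / 2) = \<bar>xi - x\<bar> powr (- \<gamma>)" unfolding s2_def using sq_powr[of "xi - x" "- \<gamma>"] by simp
      ultimately show ?thesis using GA by simp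
    qed
    have HB: "\<bar>integral {a..b} HA\<bar> \<le> CY * hy^4 * JX"
    proof -
      have "\<bar>integral {a..b} HA\<bar> \<le> (CY * hy^4) * integral {a..b} (\<lambda>x. \<bar>xi - x\<bar> powr (- \<gamma>))"
        by (rule int_bound_spike[OF HAi absint(1)[OF g0 g1 xi'[unfolded atLeastAtMost_iff, THEN conjunct1] xi'[unfolded atLeastAtMost_iff, THEN conjunct2]] HAb])
      also have "\<dots> \<le> (CY * hy^4) * JX" unfolding JX_def
        using absint(2)[OF g0 g1, of a xi b] xi' CX0 by (intro mult_left_mono) auto
      finally show ?thesis .
    qed
    have "?I = integral {c..d} FA + integral {c..d} (\<lambda>y. F y - FA y)"
      unfolding F_def[symmetric] using integral_diff[OF Fi FAi] by simp
    then have "\<bar>?I\<bar> \<le> \<bar>integral {a..b} HA\<bar> + \<bar>integral {c..d} (\<lambda>y. F y - FA y)\<bar>"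
      unfolding FAHA by simp
    also have "\<dots> \<le> CY * hy^4 * JX + 3 * CX * hx^4 * JY" using HB FB by simp
    finally show ?thesis unfolding CX_def CY_def JX_def JY_def hx_def hy_def by (simp add: algebra_simps)
  qed
qed


lemma eta_bound:
  fixes \<eta> L h \<gamma> :: real
  assumes "0 < \<eta>" "\<eta> \<le> L" "0 < \<gamma>"
  shows "h^4 \<le> L powr \<gamma> * (h^4 * \<eta> powr (- \<gamma>))"
proof -
  have "\<eta> powr \<gamma> \<le> L powr \<gamma>" using assms by (intro powr_mono2) auto
  moreover have "0 < \<eta> powr \<gamma>" using assms by simp
  ultimately have "1 \<le> L powr \<gamma> * \<eta> powr (- \<gamma>)" by (simp add: powr_minus_divide)
  moreover have "0 \<le> h^4" by simp
  ultimately have "h^4 * 1 \<le> h^4 * (L powr \<gamma> * \<eta> powr (- \<gamma>))" by (intro mult_left_mono)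
  then show ?thesis by (simp add: algebra_simps)
qed

theorem lemma3p12:
  fixes a b c d \<gamma> :: real and u :: "real \<Rightarrow> real \<Rightarrow> real"
  assumes "a < b" and "c < d" and "0 < \<gamma>" and "\<gamma> < 1"
    and "smooth2_on 6 ({a..b} \<times> {c..d}) u"
  shows "\<exists>C. \<forall>Mx My i j. 2 \<le> Mx \<longrightarrow> 2 \<le> My \<longrightarrow>
           1 \<le> i \<longrightarrow> i \<le> 2 * Mx - 1 \<longrightarrow> 1 \<le> j \<longrightarrow> j \<le> 2 * My - 1 \<longrightarrow>
           (let hx = (b - a) / real Mx; hy = (d - c) / real My;
                xi = node a hx (real i / 2); yj = node c hy (real j / 2);
                \<eta> = min (xi - a) (b - xi); \<eta>' = min (yj - c) (d - yj)
            in \<bar>integral {c..d} (\<lambda>y. integral {a..b} (\<lambda>x.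
                   (u x y - uQ u a b c d Mx My x y) / ((xi - x)\<^sup>2 + (yj - y)\<^sup>2) powr (\<gamma> / 2)))\<bar>
               \<le> C * (hx ^ 4 * \<eta> powr (- \<gamma>) + hy ^ 4 * \<eta>' powr (- \<gamma>)
                      + hx powr (5 - \<gamma>) + hy powr (5 - \<gamma>)))"
proof -
  note ab = assms(1) and cd = assms(2) and g0 = assms(3) and g1 = assms(4) and sm = assms(5)
  obtain ux1 ux2 ux3 ux4 MX3 MX4 where dx: "\<forall>x\<in>{a..b}. \<forall>y\<in>{c..d}.
       ((\<lambda>t. u t y) has_real_derivative ux1 x y) (at x within {a..b}) \<and>
       ((\<lambda>t. ux1 t y) has_real_derivative ux2 x y) (at x within {a..b}) \<and>
       ((\<lambda>t. ux2 t y) has_real_derivative ux3 x y) (at x within {a..b}) \<and>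
       ((\<lambda>t. ux3 t y) has_real_derivative ux4 x y) (at x within {a..b}) \<and>
       \<bar>ux3 x y\<bar> \<le> MX3 \<and> \<bar>ux4 x y\<bar> \<le> MX4"
    using derivs_x[OF sm] by blast
  obtain uy1 uy2 uy3 uy4 MY3 MY4 where dy: "\<forall>x\<in>{a..b}. \<forall>y\<in>{c..d}.
       ((\<lambda>t. u x t) has_real_derivative uy1 x y) (at y within {c..d}) \<and>
       ((\<lambda>t. uy1 x t) has_real_derivative uy2 x y) (at y within {c..d}) \<and>
       ((\<lambda>t. uy2 x t) has_real_derivative uy3 x y) (at y within {c..d}) \<and>
       ((\<lambda>t. uy3 x t) has_real_derivative uy4 x y) (at y within {c..d}) \<and>
       \<bar>uy3 x y\<bar> \<le> MY3 \<and> \<bar>uy4 x y\<bar> \<le> MY4"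
    using derivs_y[OF sm] by blast
  have uc: "continuous_on ({a..b} \<times> {c..d}) (\<lambda>z. u (fst z) (snd z))" by (rule smooth_cont[OF sm])
  have aI: "a \<in> {a..b}" and cI: "c \<in> {c..d}" using ab cd by auto
  have "\<bar>ux3 a c\<bar> \<le> MX3" "\<bar>ux4 a c\<bar> \<le> MX4" "\<bar>uy3 a c\<bar> \<le> MY3" "\<bar>uy4 a c\<bar> \<le> MY4"
    using bspec[OF bspec[OF dx aI] cI] bspec[OF bspec[OF dy aI] cI] by blast+
  then have MX30: "MX3 \<ge> 0" "MX4 \<ge> 0" and MY30: "MY3 \<ge> 0" "MY4 \<ge> 0"
    by (meson abs_ge_zero order_trans)+
  define CX where "CX = MX3 / 24 + 3 * MX4 * (b - a) / 128"
  define CY where "CY = MY3 / 24 + 3 * MY4 * (d - c) / 128"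
  define JX where "JX = 2 * (b - a) powr (1 - \<gamma>) / (1 - \<gamma>)"
  define JY where "JY = 2 * (d - c) powr (1 - \<gamma>) / (1 - \<gamma>)"
  define C1 where "C1 = 3 * CX * JY * ((b - a) / 2) powr \<gamma>"
  define C2 where "C2 = CY * JX * ((d - c) / 2) powr \<gamma>"
  have CX0: "CX \<ge> 0" "CY \<ge> 0" unfolding CX_def CY_def using MX30 MY30 ab cd by auto
  have J0: "JX \<ge> 0" "JY \<ge> 0" unfolding JX_def JY_def using g1 by auto
  have C0: "C1 \<ge> 0" "C2 \<ge> 0" unfolding C1_def C2_def using CX0 J0 by auto
  show ?thesis
  proof (rule exI[of _ "C1 + C2"], intro allI impI)
    fix Mx My i j :: nat
    assume Mx: "2 \<le> Mx" and My: "2 \<le> My" and i: "1 \<le> i" "i \<le> 2 * Mx - 1" and j: "1 \<le> j" "j \<le> 2 * My - 1"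
    define hx where "hx = (b - a) / real Mx"
    define hy where "hy = (d - c) / real My"
    define xi where "xi = node a hx (real i / 2)"
    define yj where "yj = node c hy (real j / 2)"
    define \<eta> where "\<eta> = min (xi - a) (b - xi)"
    define \<eta>' where "\<eta>' = min (yj - c) (d - yj)"
    have hx: "hx > 0" and hy: "hy > 0" using ab cd Mx My by (auto simp: hx_def hy_def)
    have Mhx: "real Mx * hx = b - a" and Mhy: "real My * hy = d - c" using Mx My by (auto simp: hx_def hy_def)
    have xi1: "xi - a = real i / 2 * hx" unfolding xi_def node_def by simp
    have xi2: "b - xi = (real (2 * Mx) - real i) / 2 * hx"
      unfolding xi_def node_def using Mhx by (simp add: algebra_simps)
    have ir: "real i \<ge> 1" "real i \<le> real (2 * Mx) - 1" using i Mx by linarith+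
    have eta: "0 < \<eta>" "\<eta> \<le> (b - a) / 2"
    proof -
      have "0 < xi - a" "0 < b - xi" unfolding xi1 xi2 using ir hx by auto
      then show "0 < \<eta>" unfolding \<eta>_def by simp
      show "\<eta> \<le> (b - a) / 2" unfolding \<eta>_def min_def by auto
    qed
    have yj1: "yj - c = real j / 2 * hy" unfolding yj_def node_def by simp
    have yj2: "d - yj = (real (2 * My) - real j) / 2 * hy"
      unfolding yj_def node_def using Mhy by (simp add: algebra_simps)
    have jr: "real j \<ge> 1" "real j \<le> real (2 * My) - 1" using j My by linarith+
    have eta': "0 < \<eta>'" "\<eta>' \<le> (d - c) / 2"
    proof -
      have "0 < yj - c" "0 < d - yj" unfolding yj1 yj2 using jr hy by auto
      then show "0 < \<eta>'" unfolding \<eta>'_def by simp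
      show "\<eta>' \<le> (d - c) / 2" unfolding \<eta>'_def min_def by auto
    qed
    have xir: "a < xi" "xi < b" using eta(1) unfolding \<eta>_def by auto
    have yjr: "c < yj" "yj < d" using eta'(1) unfolding \<eta>'_def by auto
    have MB: "\<bar>integral {c..d} (\<lambda>y. integral {a..b} (\<lambda>x. (u x y - uQ u a b c d Mx My x y) / ((xi - x)\<^sup>2 + (yj - y)\<^sup>2) powr (\<gamma> / 2)))\<bar>
        \<le> 3 * CX * hx^4 * JY + CY * hy^4 * JX"
      using main_bound[OF ab cd g0 g1 _ _ xir yjr uc dx dy, of Mx My] Mx My
      unfolding CX_def CY_def JX_def JY_def hx_def hy_def by (simp add: algebra_simps)
    have T1: "3 * CX * hx^4 * JY \<le> C1 * (hx^4 * \<eta> powr (- \<gamma>))"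
    proof -
      have "3 * CX * JY * hx^4 \<le> 3 * CX * JY * (((b - a) / 2) powr \<gamma> * (hx^4 * \<eta> powr (- \<gamma>)))"
        using eta_bound[OF eta g0, of hx] CX0 J0 by (intro mult_left_mono) auto
      then show ?thesis unfolding C1_def by (simp add: algebra_simps)
    qed
    have T2: "CY * hy^4 * JX \<le> C2 * (hy^4 * \<eta>' powr (- \<gamma>))"
    proof -
      have "CY * JX * hy^4 \<le> CY * JX * (((d - c) / 2) powr \<gamma> * (hy^4 * \<eta>' powr (- \<gamma>)))"
        using eta_bound[OF eta' g0, of hy] CX0 J0 by (intro mult_left_mono) auto
      then show ?thesis unfolding C2_def by (simp add: algebra_simps)
    qed
    have nn: "0 \<le> hx^4 * \<eta> powr (- \<gamma>)" "0 \<le> hy^4 * \<eta>' powr (- \<gamma>)" "0 \<le> hx powr (5 - \<gamma>)" "0 \<le> hy powr (5 - \<gamma>)"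
      by auto
    have "C1 * (hx^4 * \<eta> powr (- \<gamma>)) + C2 * (hy^4 * \<eta>' powr (- \<gamma>))
        \<le> (C1 + C2) * (hx ^ 4 * \<eta> powr (- \<gamma>) + hy ^ 4 * \<eta>' powr (- \<gamma>) + hx powr (5 - \<gamma>) + hy powr (5 - \<gamma>))"
    proof -
      have "C1 * (hx^4 * \<eta> powr (- \<gamma>)) \<le> C1 * (hx ^ 4 * \<eta> powr (- \<gamma>) + hy ^ 4 * \<eta>' powr (- \<gamma>) + hx powr (5 - \<gamma>) + hy powr (5 - \<gamma>))"
        using C0 nn by (intro mult_left_mono) auto
      moreover have "C2 * (hy^4 * \<eta>' powr (- \<gamma>)) \<le> C2 * (hx ^ 4 * \<eta> powr (- \<gamma>) + hy ^ 4 * \<eta>' powr (- \<gamma>) + hx powr (5 - \<gamma>) + hy powr (5 - \<gamma>))"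
        using C0 nn by (intro mult_left_mono) auto
      ultimately show ?thesis by (simp add: distrib_right)
    qed
    then have fin: "\<bar>integral {c..d} (\<lambda>y. integral {a..b} (\<lambda>x. (u x y - uQ u a b c d Mx My x y) / ((xi - x)\<^sup>2 + (yj - y)\<^sup>2) powr (\<gamma> / 2)))\<bar>
        \<le> (C1 + C2) * (hx ^ 4 * \<eta> powr (- \<gamma>) + hy ^ 4 * \<eta>' powr (- \<gamma>) + hx powr (5 - \<gamma>) + hy powr (5 - \<gamma>))"
      using MB T1 T2 by linarith
    show "let hx = (b - a) / real Mx; hy = (d - c) / real My;
                xi = node a hx (real i / 2); yj = node c hy (real j / 2);
                \<eta> = min (xi - a) (b - xi); \<eta>' = min (yj - c) (d - yj)
            in \<bar>integral {c..d} (\<lambda>y. integral {a..b} (\<lambda>x.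
                   (u x y - uQ u a b c d Mx My x y) / ((xi - x)\<^sup>2 + (yj - y)\<^sup>2) powr (\<gamma> / 2)))\<bar>
               \<le> (C1 + C2) * (hx ^ 4 * \<eta> powr (- \<gamma>) + hy ^ 4 * \<eta>' powr (- \<gamma>)
                      + hx powr (5 - \<gamma>) + hy powr (5 - \<gamma>))"
      unfolding Let_def using fin unfolding hx_def hy_def xi_def yj_def \<eta>_def \<eta>'_def .
  qed
qed


end
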